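(* Consider the plant $\dot x=Ax+Bu+Ep(q)+E_ww$, $y=Cx+F_ww$, $q=C_qx$ (i.e. $D=\mathbf 0$), where $p$ is globally Lipschitz continuous and the disturbance satisfies $\|w\|_\infty\le\omega_0$ for an arbitrary given $\omega_0>0$. Suppose there exist $\alpha_0>0$, $\mu>0$, a symmetric $P>0$ in $\mathbb{R}^{2n_x\times2n_x}$ and matrices $K_1,K_2,L_1,L_2$ such that, for the continuous-time closed-loop system formed by the plant, the observer $\dot{\hat x}=A\hat x+Bu+Ep(\hat q+L_1(\hat y-y))+L_2(\hat y-y)$, $\hat y=C\hat x$, $\hat q=C_q\hat x$, and the controller $u=K_1\hat x+K_2p(C_q\hat x)$, the function $V(z)=z^\top Pz$ with $z=(x^\top,(x-\hat x)^\top)^\top$ satisfies $\dot V\le-\alpha_0V+\mu\|w\|^2$ along its trajectories. Now consider the implementation with two asynchronous event-triggering mechanisms: output sampling times $t_0^y=0<t_1^y<\cdots$ with $y_s(t)=y(t_k^y)$ for $t\in[t_k^y,t_{k+1}^y)$ and $t_{k+1}^y=\inf\{t\mid t\ge t_k^y+\tau_y,\ \|y_s(t)-y(t)\|>\sigma_y\|y(t)\|+\epsilon_y\}$; observer $\dot{\hat x}=A\hat x+Bu+Ep(\hat q+L_1(\hat y-y_s))+L_2(\hat y-y_s)$, $\hat y=C\hat x$, $\hat q=C_q\hat x$; controller update times $t_0^u=0<t_1^u<\cdots$ with $\hat x_s(t)=\hat x(t_k^u)$ for $t\in[t_k^u,t_{k+1}^u)$, $t_{k+1}^u=\inf\{t\mid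 t\ge t_k^u+\tau_u,\ \|\hat x_s(t)-\hat x(t)\|>\sigma_u\|\hat x(t)\|+\epsilon_u\}$, and input $u(t)=K_1\hat x_s(t)+K_2p(C_q\hat x_s(t))$. Then positive numbers $\tau_y,\sigma_y,\epsilon_y,\tau_u,\sigma_u,\epsilon_u$ can be chosen such that this event-triggered closed-loop system is input-to-state practically stable with respect to $w$.
   Context: Plant: $x\in\mathbb{R}^{n_x}$ state, $u\in\mathbb{R}^{n_u}$ input, $y\in\mathbb{R}^{n_y}$ output, $w\in\mathbb{R}^{n_w}$ unknown measurable disturbance; $A,B,C,C_q,E,E_w,F_w$ constant real matrices of compatible sizes; $p:\mathbb{R}^{n_q}\to\mathbb{R}^{n_p}$ known with $p(0)=0$. The closed loop is input-to-state practically stable (ISpS) w.r.t. $w$ if there exist $\beta_1\in\mathcal{KL}$, $\beta_2\in\mathcal K$ and a constant $d\ge0$ such that for every initial condition $(x(0),\hat x(0))$ and every admissible disturbance $w$, $\|z(t)\|\le\beta_1(\|z(0)\|,t)+\beta_2(\|w\|_\infty)+d$ for all $t\ge0$, where $z=(x^\top,(x-\hat x)^\top)^\top$ and $\|w\|_\infty=\sup_{t\ge0}\|w(t)\|$. *)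

theory Defs
  imports "HOL-Analysis.Analysis"
begin

text \<open>Concatenation of two vectors in R^n into a vector in R^(2n).\<close>
definition cat :: "real^'n \<Rightarrow> real^'n \<Rightarrow> real^('n + 'n)" where
  "cat a b = (\<chi> i. case i of Inl j \<Rightarrow> a $ j | Inr j \<Rightarrow> b $ j)"

text \<open>Comparison functions (defined on [0,oo)).\<close>
definition classK :: "(real \<Rightarrow> real) \<Rightarrow> bool" where
  "classK \<alpha> \<longleftrightarrow> continuous_on {0..} \<alpha> \<and> \<alpha> 0 = 0 \<and> strict_mono_on {0..} \<alpha>"

definition classKL :: "(real \<Rightarrow> real \<Rightarrow> real) \<Rightarrow> bool" where
  "classKL \<beta> \<longleftrightarrow> (\<forall>t\<ge>0. classK (\<lambda>r. \<beta> r t)) \<and>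
     (\<forall>r\<ge>0. (\<forall>s t. 0 \<le> s \<and> s \<le> t \<longrightarrow> \<beta> r t \<le> \<beta> r s) \<and> ((\<beta> r) \<longlongrightarrow> 0) at_top)"

text \<open>Sup norm of a disturbance over [0,oo), and admissible disturbances.\<close>
definition winf :: "(real \<Rightarrow> 'a::real_normed_vector) \<Rightarrow> real" where
  "winf w = (SUP t\<in>{0..}. norm (w t))"

definition admissible :: "real \<Rightarrow> (real \<Rightarrow> 'a::euclidean_space) \<Rightarrow> bool" where
  "admissible \<omega>0 w \<longleftrightarrow> w \<in> borel_measurable lebesgue \<and> (\<forall>t\<ge>0. norm (w t) \<le> \<omega>0)"

text \<open>Event-triggering rule: t_0 = 0 and
  t_(k+1) = inf {t | t >= t_k + tau, ||sig(t_k) - sig(t)|| > sigma ||sig(t)|| + eps};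
  times are extended reals (inf of the empty set = oo: no further event).\<close>
definition trig :: "real \<Rightarrow> real \<Rightarrow> real \<Rightarrow> (real \<Rightarrow> 'a::real_normed_vector) \<Rightarrow> (nat \<Rightarrow> ereal) \<Rightarrow> bool" where
  "trig \<tau> \<sigma> \<epsilon> sig ts \<longleftrightarrow> ts 0 = 0 \<and>
     (\<forall>k. ts (Suc k) = (if ts k = \<infinity> then \<infinity> else
        Inf (ereal ` {t. real_of_ereal (ts k) + \<tau> \<le> t \<and>
               \<sigma> * norm (sig t) + \<epsilon> < norm (sig (real_of_ereal (ts k)) - sig t)})))"

text \<open>Zero-order hold: hs(t) = sig(t_k) for t in [t_k, t_(k+1)).\<close>
definition held :: "(nat \<Rightarrow> ereal) \<Rightarrow> (real \<Rightarrow> 'a) \<Rightarrow> (real \<Rightarrow> 'a) \<Rightarrow> bool" where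
  "held ts sig hs \<longleftrightarrow> (\<forall>k t. ts k \<le> ereal t \<and> ereal t < ts (Suc k) \<longrightarrow> hs t = sig (real_of_ereal (ts k)))"

text \<open>(x, xh) is a solution on [0,oo) of the event-triggered closed loop with disturbance w
  (Caratheodory sense: integral equations).\<close>
definition et_solution ::
  "real^'nx^'nx \<Rightarrow> real^'nu^'nx \<Rightarrow> real^'nx^'ny \<Rightarrow> real^'nx^'nq \<Rightarrow> real^'np^'nx \<Rightarrow>
   real^'nw^'nx \<Rightarrow> real^'nw^'ny \<Rightarrow> (real^'nq \<Rightarrow> real^'np) \<Rightarrow>
   real^'nx^'nu \<Rightarrow> real^'np^'nu \<Rightarrow> real^'ny^'nq \<Rightarrow> real^'ny^'nx \<Rightarrow>
   real \<Rightarrow> real \<Rightarrow> real \<Rightarrow> real \<Rightarrow> real \<Rightarrow> real \<Rightarrow>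
   (real \<Rightarrow> real^'nx) \<Rightarrow> (real \<Rightarrow> real^'nx) \<Rightarrow> (real \<Rightarrow> real^'nw) \<Rightarrow> bool" where
  "et_solution A B C Cq E Ew Fw p K1 K2 L1 L2 \<tau>y \<sigma>y \<epsilon>y \<tau>u \<sigma>u \<epsilon>u x xh w \<longleftrightarrow>
    (\<exists>ty tu ys xhs.
      (let y = (\<lambda>t. C *v x t + Fw *v w t);
           u = (\<lambda>t. K1 *v xhs t + K2 *v p (Cq *v xhs t)) in
       trig \<tau>y \<sigma>y \<epsilon>y y ty \<and> held ty y ys \<and>
       trig \<tau>u \<sigma>u \<epsilon>u xh tu \<and> held tu xh xhs \<and>
       (\<forall>t\<ge>0.
          ((\<lambda>s. A *v x s + B *v u s + E *v p (Cq *v x s) + Ew *v w s)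
             has_integral (x t - x 0)) {0..t} \<and>
          ((\<lambda>s. A *v xh s + B *v u s
                 + E *v p (Cq *v xh s + L1 *v (C *v xh s - ys s))
                 + L2 *v (C *v xh s - ys s))
             has_integral (xh t - xh 0)) {0..t})))"

text \<open>Input-to-state practical stability w.r.t. w (admissible: measurable, sup-norm at most omega0).\<close>
definition ISpS :: "real \<Rightarrow> ((real \<Rightarrow> real^'nx) \<Rightarrow> (real \<Rightarrow> real^'nx) \<Rightarrow> (real \<Rightarrow> real^'nw) \<Rightarrow> bool) \<Rightarrow> bool" where
  "ISpS \<omega>0 sol \<longleftrightarrow> (\<exists>\<beta>1 \<beta>2 d. classKL \<beta>1 \<and> classK \<beta>2 \<and> d \<ge> 0 \<and>
     (\<forall>x xh w. admissible \<omega>0 w \<and> sol x xh w \<longrightarrow>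
        (\<forall>t\<ge>0. norm (cat (x t) (x t - xh t))
                 \<le> \<beta>1 (norm (cat (x 0) (x 0 - xh 0))) t + \<beta>2 (winf w) + d)))"

end

theory Submission
  imports Defs
begin

(* ---- Cat ---- *)

lemma cat_nth[simp]: "cat a b $ Inl j = a $ j" "cat a b $ Inr j = b $ j"
  unfolding cat_def by auto

lemma cat_inner: "cat a b \<bullet> cat c d = a \<bullet> c + b \<bullet> d"
proof -
  have "cat a b \<bullet> cat c d = (\<Sum>i\<in>Inl ` UNIV \<union> Inr ` UNIV. cat a b $ i * cat c d $ i)"
    unfolding inner_vec_def UNIV_sum[symmetric] by simp
  also have "\<dots> = (\<Sum>i\<in>Inl ` UNIV. cat a b $ i * cat c d $ i) + (\<Sum>i\<in>Inr ` UNIV. cat a b $ i * cat c d $ i)"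
    by (rule sum.union_disjoint) auto
  also have "\<dots> = a \<bullet> c + b \<bullet> d"
    by (simp add: sum.reindex inner_vec_def)
  finally show ?thesis .
qed

lemma norm_cat_sq: "(norm (cat a b))\<^sup>2 = (norm a)\<^sup>2 + (norm b)\<^sup>2"
  by (simp add: power2_norm_eq_inner cat_inner)

lemma norm_cat_ge1: "norm a \<le> norm (cat a b)"
  using norm_cat_sq[of a b] by (smt (verit) norm_ge_zero power2_le_imp_le zero_le_power2)

lemma norm_cat_ge2: "norm b \<le> norm (cat a b)"
  using norm_cat_sq[of a b] by (smt (verit) norm_ge_zero power2_le_imp_le zero_le_power2)

lemma norm_cat_le: "norm (cat a b) \<le> norm a + norm b"
proof -
  have "(norm (cat a b))\<^sup>2 \<le> (norm a + norm b)\<^sup>2"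
    unfolding norm_cat_sq by (simp add: power2_eq_square algebra_simps)
  then show ?thesis by (rule power2_le_imp_le) simp
qed

lemma cat_add: "cat (a + c) (b + d) = cat a b + cat c d"
  by (simp add: vec_eq_iff cat_def split: sum.splits)

lemma cat_diff: "cat (a - c) (b - d) = cat a b - cat c d"
  by (simp add: vec_eq_iff cat_def split: sum.splits)

lemma cat_scale: "cat (r *\<^sub>R a) (r *\<^sub>R b) = r *\<^sub>R cat a b"
  by (simp add: vec_eq_iff cat_def split: sum.splits)

lemma cat_zero: "cat 0 0 = 0"
  by (simp add: vec_eq_iff cat_def split: sum.splits)

lemma bl_catL: "bounded_linear (\<lambda>a. cat a 0)"
proof -
  have "linear (\<lambda>a. cat a 0)"
    by (rule linearI) (simp_all add: vec_eq_iff cat_def split: sum.splits)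
  then show ?thesis by (rule linear_conv_bounded_linear[THEN iffD1])
qed

lemma bl_catR: "bounded_linear (\<lambda>b. cat 0 b)"
proof -
  have "linear (\<lambda>b. cat 0 b)"
    by (rule linearI) (simp_all add: vec_eq_iff cat_def split: sum.splits)
  then show ?thesis by (rule linear_conv_bounded_linear[THEN iffD1])
qed

lemma has_integral_cat:
  assumes "(f has_integral i) S" "(g has_integral j) S"
  shows "((\<lambda>s. cat (f s) (g s)) has_integral cat i j) S"
proof -
  have 1: "((\<lambda>s. cat (f s) 0) has_integral cat i 0) S"
    using has_integral_linear[OF assms(1) bl_catL] by (simp add: o_def)
  have 2: "((\<lambda>s. cat 0 (g s)) has_integral cat 0 j) S"
    using has_integral_linear[OF assms(2) bl_catR] by (simp add: o_def)
  show ?thesis using has_integral_add[OF 1 2] by (simp add: cat_add[symmetric])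
qed

lemma matrix_bound: "\<exists>c\<ge>0. \<forall>v. norm (M *v v) \<le> c * norm v"
  for M :: "real^'n^'m"
proof -
  obtain c where "c > 0" "\<forall>v. norm (M *v v) \<le> norm v * c"
    using bounded_linear.pos_bounded[OF matrix_vector_mul_bounded_linear[of M]] by blast
  then show ?thesis by (metis less_imp_le mult.commute)
qed


(* ---- Trig ---- *)

lemma trig_times:
  assumes tr: "trig \<tau> \<sigma> \<epsilon> sig ts" and tau: "\<tau> > 0"
  shows "ts k = \<infinity> \<or> (\<exists>t. ts k = ereal t \<and> t \<ge> real k * \<tau>)"
proof (induction k)
  case 0
  then show ?case using tr unfolding trig_def by auto
next
  case (Suc k)
  show ?case
  proof (cases "ts k = \<infinity>")
    case True
    then show ?thesis using tr unfolding trig_def by auto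
  next
    case False
    then obtain t where t: "ts k = ereal t" "t \<ge> real k * \<tau>" using Suc by auto
    define S where "S = {t'. real_of_ereal (ts k) + \<tau> \<le> t' \<and>
               \<sigma> * norm (sig t') + \<epsilon> < norm (sig (real_of_ereal (ts k)) - sig t')}"
    have eq: "ts (Suc k) = Inf (ereal ` S)" using tr False unfolding trig_def S_def by auto
    show ?thesis
    proof (cases "S = {}")
      case True
      then show ?thesis using eq by (simp add: top_ereal_def)
    next
      case False
      then obtain s0 where s0: "s0 \<in> S" by auto
      have lo: "ereal (t + \<tau>) \<le> Inf (ereal ` S)"
        by (rule Inf_greatest) (use t in \<open>auto simp: S_def\<close>)
      have up: "Inf (ereal ` S) \<le> ereal s0" by (rule Inf_lower) (use s0 in auto)
      obtain e where e: "Inf (ereal ` S) = ereal e" using lo up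
        by (cases "Inf (ereal ` S)") auto
      have "e \<ge> t + \<tau>" using lo e by simp
      then have "e \<ge> real (Suc k) * \<tau>" using t by (simp add: algebra_simps)
      then show ?thesis using eq e by auto
    qed
  qed
qed

lemma trig_held:
  fixes sig :: "real \<Rightarrow> 'a::real_normed_vector"
  assumes tr: "trig \<tau> \<sigma> \<epsilon> sig ts" and hd: "held ts sig hs" and tau: "\<tau> > 0" and r0: "r \<ge> 0"
  shows "\<exists>t0. 0 \<le> t0 \<and> t0 \<le> r \<and> hs r = sig t0 \<and>
           (r < t0 + \<tau> \<or> norm (sig t0 - sig r) \<le> \<sigma> * norm (sig r) + \<epsilon>)"
proof -
  define Ks where "Ks = {k. ts k \<le> ereal r}"
  have "0 \<in> Ks" using tr r0 unfolding trig_def Ks_def by (simp add: zero_ereal_def)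
  have bnd: "k \<le> nat \<lceil>r / \<tau>\<rceil>" if "k \<in> Ks" for k
  proof -
    have le: "ts k \<le> ereal r" using that Ks_def by auto
    from trig_times[OF tr tau, of k] obtain t where t: "ts k = ereal t" "t \<ge> real k * \<tau>"
      using le by auto
    then have "real k * \<tau> \<le> r" using le by auto
    then have "real k \<le> r / \<tau>" using tau by (simp add: field_simps)
    then show ?thesis by linarith
  qed
  have fin: "finite Ks" by (rule finite_subset[of _ "{..nat \<lceil>r / \<tau>\<rceil>}"]) (use bnd in auto)
  define k where "k = Max Ks"
  have kin: "k \<in> Ks" unfolding k_def using fin \<open>0 \<in> Ks\<close> by (intro Max_in) auto
  have knext: "Suc k \<notin> Ks" using Max_ge[OF fin, of "Suc k"] unfolding k_def by auto
  have le: "ts k \<le> ereal r" using kin Ks_def by auto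
  have gt: "ereal r < ts (Suc k)" using knext Ks_def by auto
  from trig_times[OF tr tau, of k] obtain t0 where t0: "ts k = ereal t0" "t0 \<ge> real k * \<tau>"
    using le by auto
  have t0r: "t0 \<le> r" using le t0 by auto
  have t00: "t0 \<ge> 0" using t0 tau by (smt (verit) of_nat_0_le_iff mult_nonneg_nonneg)
  have hsr: "hs r = sig t0" using hd le gt t0 unfolding held_def by (metis real_of_ereal.simps(1))
  have alt: "r < t0 + \<tau> \<or> norm (sig t0 - sig r) \<le> \<sigma> * norm (sig r) + \<epsilon>"
  proof (rule ccontr)
    assume "\<not> ?thesis"
    then have a: "t0 + \<tau> \<le> r" "\<sigma> * norm (sig r) + \<epsilon> < norm (sig t0 - sig r)" by auto
    define S where "S = {t'. real_of_ereal (ts k) + \<tau> \<le> t' \<and>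
               \<sigma> * norm (sig t') + \<epsilon> < norm (sig (real_of_ereal (ts k)) - sig t')}"
    have eq: "ts (Suc k) = Inf (ereal ` S)" using tr t0 unfolding trig_def S_def by auto
    have "r \<in> S" using a t0 unfolding S_def by auto
    then have "Inf (ereal ` S) \<le> ereal r" by (intro Inf_lower) auto
    then show False using gt eq by auto
  qed
  show ?thesis using t00 t0r hsr alt by blast
qed


(* ---- Core ---- *)

locale core =
  fixes P :: "real^'m^'m" and al la La K C eta h :: real
    and z :: "real \<Rightarrow> real^'m" and G :: "real \<Rightarrow> real^'m"
  assumes al_pos: "al > 0" and la_pos: "la > 0" and La_pos: "La > 0"
    and K_pos: "K > 0" and C_nn: "C \<ge> 0" and eta_nn: "eta \<ge> 0" and h_pos: "h > 0"
    and Vlow: "\<And>v. la * (norm v)\<^sup>2 \<le> v \<bullet> (P *v v)"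
    and Vup: "\<And>a b. \<bar>a \<bullet> (P *v b)\<bar> \<le> La * norm a * norm b"
    and Psym: "\<And>a b. a \<bullet> (P *v b) = b \<bullet> (P *v a)"
    and hK: "h * K \<le> 1/4" and hal: "h * al \<le> La"
    and cxi: "64 * La * (8*al*h*K + 4*eta + 8*La*h*K\<^sup>2) \<le> al * la"
    and zcont: "\<And>T. T \<ge> 0 \<Longrightarrow> continuous_on {0..T} z"
    and zint: "\<And>s t. 0 \<le> s \<Longrightarrow> s \<le> t \<Longrightarrow> (G has_integral (z t - z s)) {s..t}"
    and H1: "\<And>r M. r \<ge> 0 \<Longrightarrow> (\<forall>q\<in>{max 0 (r-h)..r}. norm (z q) \<le> M) \<Longrightarrow> norm (G r) \<le> K * (M + 1)"
    and H2: "\<And>r M. r \<ge> 0 \<Longrightarrow> (\<forall>q\<in>{max 0 (r-2*h)..r}. norm (z q) \<le> M) \<Longrightarrow>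
              2 * (G r \<bullet> (P *v z r)) \<le> - al * (norm (z r))\<^sup>2 + eta * M\<^sup>2 + C * (M + 1)"
begin

lemma int_diff:
  assumes "0 \<le> s" "s \<le> q" "\<And>q'. q' \<in> {s..q} \<Longrightarrow> norm (G q') \<le> Kb" "Kb \<ge> 0"
  shows "norm (z q - z s) \<le> (q - s) * Kb"
proof -
  have "norm (z q - z s) \<le> Kb * (q - s)"
    using has_integral_bound[OF assms(4) zint[OF assms(1,2), folded cbox_interval]] assms(2,3)
    by (auto simp: cbox_interval)
  then show ?thesis using assms(2) by (simp add: mult.commute)
qed

lemma growth:
  assumes s0: "0 \<le> s" and sr: "s \<le> r" and rh: "r \<le> s + h" and P0: "P0 \<ge> 0"
    and past: "\<forall>q\<in>{max 0 (s-h)..s}. norm (z q) \<le> P0"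
  shows "\<forall>q\<in>{s..r}. norm (z q) \<le> 2 * P0 + 1"
proof -
  have "continuous_on {s..r} (\<lambda>q. norm (z q))"
    by (rule continuous_on_norm, rule continuous_on_subset[OF zcont[of r]]) (use s0 sr in auto)
  then obtain qm where qm: "qm \<in> {s..r}" and qmax: "\<forall>q\<in>{s..r}. norm (z q) \<le> norm (z qm)"
    using continuous_attains_sup[of "{s..r}" "\<lambda>q. norm (z q)"] sr by auto
  define M' where "M' = max P0 (norm (z qm))"
  have win: "norm (G q') \<le> K * (M' + 1)" if "q' \<in> {s..qm}" for q'
  proof (rule H1)
    show "q' \<ge> 0" using that s0 by auto
    show "\<forall>q\<in>{max 0 (q'-h)..q'}. norm (z q) \<le> M'"
    proof
      fix q assume q: "q \<in> {max 0 (q'-h)..q'}"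
      show "norm (z q) \<le> M'"
      proof (cases "q \<le> s")
        case True
        then have "q \<in> {max 0 (s-h)..s}" using q that by auto
        then show ?thesis using past M'_def by force
      next
        case False
        then have "q \<in> {s..r}" using q that qm by auto
        then show ?thesis using qmax M'_def by force
      qed
    qed
  qed
  have "norm (z qm - z s) \<le> (qm - s) * (K * (M' + 1))"
    by (rule int_diff) (use qm s0 win K_pos P0 M'_def in \<open>auto intro!: mult_nonneg_nonneg\<close>)
  also have "\<dots> \<le> h * (K * (M' + 1))"
    by (rule mult_right_mono) (use qm rh K_pos P0 M'_def in auto)
  also have "\<dots> = (h * K) * (M' + 1)" by simp
  also have "\<dots> \<le> (1/4) * (M' + 1)"
    by (rule mult_right_mono[OF hK]) (use P0 M'_def in auto)
  finally have A: "norm (z qm - z s) \<le> (M' + 1) / 4" by simp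
  have ns: "norm (z s) \<le> P0" using past s0 h_pos by auto
  have "norm (z qm) \<le> norm (z s) + norm (z qm - z s)"
    by (metis norm_triangle_sub add.commute)
  then have B: "norm (z qm) \<le> P0 + (M' + 1) / 4" using A ns by linarith
  have "norm (z qm) \<le> 2 * P0 + 1"
    using B P0 unfolding M'_def by (auto simp: max_def field_simps split: if_splits)
  then show ?thesis using qmax by force
qed

definition V where "V v = v \<bullet> (P *v v)"
definition xi where "xi = 8*al*h*K + 4*eta + 8*La*h*K\<^sup>2"

lemma V_diff: "V a - V b = (a - b) \<bullet> (P *v (a + b))"
  unfolding V_def using Psym[of a b]
  by (simp add: matrix_vector_right_distrib inner_diff_left inner_add_right)

lemma step:
  assumes s0: "0 \<le> s" and sr: "s \<le> r" and rh: "r \<le> s + h" and Pb: "Pb \<ge> 0"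
    and past: "\<forall>q\<in>{max 0 (s-2*h)..s}. norm (z q) \<le> Pb"
  shows "V (z r) \<le> V (z s) + (r - s) * (- al * (norm (z s))\<^sup>2 + xi * (Pb+1)\<^sup>2 + 2*C*(Pb+1))"
proof -
  define M where "M = 2 * Pb + 1"
  define Gm where "Gm = K * (M + 1)"
  have M0: "M \<ge> 0" "Pb \<le> M" using Pb M_def by auto
  have Gm0: "Gm \<ge> 0" using M0 K_pos Gm_def by auto
  have past1: "\<forall>q\<in>{max 0 (s-h)..s}. norm (z q) \<le> Pb" using past h_pos by auto
  have gr: "\<forall>q\<in>{s..r}. norm (z q) \<le> M"
    using growth[OF s0 sr rh Pb past1] M_def by auto
  have winM: "norm (z q) \<le> M" if "q \<in> {max 0 (s-2*h)..r}" for q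
  proof (cases "q \<le> s")
    case True then show ?thesis using past that M0 by force
  next
    case False then show ?thesis using gr that by auto
  qed
  have Gb: "norm (G q) \<le> Gm" if q: "q \<in> {s..r}" for q
    unfolding Gm_def
    by (rule H1) (use q s0 h_pos winM in auto)
  have dr: "norm (z r - z q) \<le> h * Gm" if q: "q \<in> {s..r}" for q
  proof -
    have "norm (z r - z q) \<le> (r - q) * Gm"
      by (rule int_diff) (use q s0 Gb Gm0 in auto)
    also have "\<dots> \<le> h * Gm" by (rule mult_right_mono) (use q rh Gm0 in auto)
    finally show ?thesis .
  qed
  have ds: "norm (z q - z s) \<le> h * Gm" if q: "q \<in> {s..r}" for q
  proof -
    have "norm (z q - z s) \<le> (q - s) * Gm"
      by (rule int_diff) (use q s0 Gb Gm0 in auto)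
    also have "\<dots> \<le> h * Gm" by (rule mult_right_mono) (use q rh Gm0 in auto)
    finally show ?thesis .
  qed
  have H2q: "2 * (G q \<bullet> (P *v z q)) \<le> - al * (norm (z q))\<^sup>2 + eta * M\<^sup>2 + C * (M + 1)"
    if q: "q \<in> {s..r}" for q
    by (rule H2) (use q s0 h_pos winM in auto)
  have low: "(norm (z s))\<^sup>2 - 2 * M * (h * Gm) \<le> (norm (z q))\<^sup>2" if q: "q \<in> {s..r}" for q
  proof -
    define ns nq d where "ns = norm (z s)" and "nq = norm (z q)" and "d = h * Gm"
    have t: "ns \<le> nq + norm (z s - z q)" unfolding ns_def nq_def by (rule norm_triangle_sub)
    have "norm (z s - z q) \<le> d" using ds[OF q] unfolding d_def by (simp add: norm_minus_commute)
    then have a: "ns - d \<le> nq" using t by linarith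
    have b: "ns \<le> M" using winM[of s] s0 sr h_pos unfolding ns_def by auto
    have d0: "d \<ge> 0" using h_pos Gm0 unfolding d_def by auto
    have ns0: "ns \<ge> 0" "nq \<ge> 0" unfolding ns_def nq_def by auto
    have c: "ns\<^sup>2 - 2 * ns * d \<le> nq\<^sup>2"
    proof (cases "ns - d \<ge> 0")
      case True
      have "(ns - d)\<^sup>2 \<le> nq\<^sup>2" by (rule power_mono[OF a True])
      moreover have "(ns - d)\<^sup>2 = ns\<^sup>2 - 2 * ns * d + d\<^sup>2" by (simp add: power2_eq_square algebra_simps)
      moreover have "d\<^sup>2 \<ge> 0" by simp
      ultimately show ?thesis by linarith
    next
      case False
      have "ns * (ns - 2 * d) \<le> 0" by (rule mult_nonneg_nonpos) (use False ns0 d0 in auto)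
      then have "ns\<^sup>2 - 2 * ns * d \<le> 0" by (simp add: power2_eq_square algebra_simps)
      moreover have "nq\<^sup>2 \<ge> 0" by simp
      ultimately show ?thesis by linarith
    qed
    have "2 * ns * d \<le> 2 * M * d"
      using b d0 by (simp add: mult_right_mono)
    then show ?thesis using c unfolding ns_def nq_def d_def by linarith
  qed
  define vv where "vv = P *v (z r + z s)"
  define bc where "bc = - al * (norm (z s))\<^sup>2 + 2 * al * M * (h * Gm) + eta * M\<^sup>2 + C * (M + 1) + 2 * La * h * Gm\<^sup>2"
  have pw: "G q \<bullet> vv \<le> bc" if q: "q \<in> {s..r}" for q
  proof -
    have eq: "vv = 2 *\<^sub>R (P *v z q) + P *v (z r - z q) - P *v (z q - z s)"
      unfolding vv_def by (simp add: matrix_vector_mult_diff_distrib matrix_vector_right_distrib scaleR_2)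
    have i: "G q \<bullet> vv = 2 * (G q \<bullet> (P *v z q)) + G q \<bullet> (P *v (z r - z q)) - G q \<bullet> (P *v (z q - z s))"
      unfolding eq by (simp add: inner_diff_right inner_add_right)
    have e1: "G q \<bullet> (P *v (z r - z q)) \<le> La * Gm * (h * Gm)"
    proof -
      have "G q \<bullet> (P *v (z r - z q)) \<le> La * norm (G q) * norm (z r - z q)" using Vup by (smt (verit))
      also have "\<dots> \<le> La * Gm * (h * Gm)"
      proof -
        have "norm (G q) * norm (z r - z q) \<le> Gm * (h * Gm)"
          by (rule mult_mono[OF Gb[OF q] dr[OF q]]) (use Gm0 in auto)
        then show ?thesis using La_pos by (simp add: mult.assoc mult_left_mono)
      qed
      finally show ?thesis .
    qed
    have e2: "- (G q \<bullet> (P *v (z q - z s))) \<le> La * Gm * (h * Gm)"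
    proof -
      have "- (G q \<bullet> (P *v (z q - z s))) \<le> La * norm (G q) * norm (z q - z s)" using Vup by (smt (verit))
      also have "\<dots> \<le> La * Gm * (h * Gm)"
      proof -
        have "norm (G q) * norm (z q - z s) \<le> Gm * (h * Gm)"
          by (rule mult_mono[OF Gb[OF q] ds[OF q]]) (use Gm0 in auto)
        then show ?thesis using La_pos by (simp add: mult.assoc mult_left_mono)
      qed
      finally show ?thesis .
    qed
    have "- al * (norm (z q))\<^sup>2 \<le> - al * ((norm (z s))\<^sup>2 - 2 * M * (h * Gm))"
      using low[OF q] al_pos by simp
    then show ?thesis using i e1 e2 H2q[OF q] unfolding bc_def
      by (simp add: power2_eq_square algebra_simps)
  qed
  have int1: "((\<lambda>q. G q \<bullet> vv) has_integral ((z r - z s) \<bullet> vv)) {s..r}"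
    using has_integral_linear[OF zint[OF s0 sr] bounded_linear_inner_left[of vv]] by (simp add: o_def)
  have int2: "((\<lambda>q. bc) has_integral ((r - s) * bc)) {s..r}"
    using has_integral_const_real[of bc s r] sr by simp
  have "V (z r) - V (z s) \<le> (r - s) * bc"
    unfolding V_diff vv_def[symmetric] by (rule has_integral_le[OF int1 int2 pw])
  moreover have "bc \<le> - al * (norm (z s))\<^sup>2 + xi * (Pb+1)\<^sup>2 + 2*C*(Pb+1)"
  proof -
    have m1: "M \<le> 2 * (Pb + 1)" using M_def by simp
    have m2: "M\<^sup>2 \<le> (2 * (Pb + 1))\<^sup>2" by (rule power_mono[OF m1 M0(1)])
    have m3: "eta * M\<^sup>2 \<le> eta * (2 * (Pb + 1))\<^sup>2" by (rule mult_left_mono[OF m2 eta_nn])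
    have hg: "h * Gm \<ge> 0" using h_pos Gm0 by simp
    have m4: "2 * al * M * (h * Gm) \<le> 2 * al * (2 * (Pb + 1)) * (h * Gm)"
      using m1 al_pos hg by (simp add: mult_right_mono mult_left_mono)
    have gm: "Gm = 2 * K * (Pb + 1)" unfolding Gm_def M_def by simp
    have e: "- al * (norm (z s))\<^sup>2 + 2 * al * (2 * (Pb + 1)) * (h * Gm) + eta * (2 * (Pb + 1))\<^sup>2 + C * (M + 1) + 2 * La * h * Gm\<^sup>2
        = - al * (norm (z s))\<^sup>2 + xi * (Pb+1)\<^sup>2 + 2*C*(Pb+1)"
      unfolding gm xi_def M_def by (simp add: power2_eq_square algebra_simps)
    show ?thesis using m3 m4 e unfolding bc_def by linarith
  qed
  ultimately show ?thesis using sr by (smt (verit) mult_left_mono)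
qed

definition aa where "aa = al / (4 * La)"
definition dl where "dl = al * la / (32 * La)"
definition EE where "EE = 2 * xi + 2 * C + C\<^sup>2 / dl"
definition BB where "BB = 8 * La * EE / al"

lemma consts_facts:
  "aa > 0" "dl > 0" "xi \<ge> 0" "EE \<ge> 0" "BB \<ge> 0" "aa * h \<le> 1/4"
  "64 * La * xi \<le> al * la" "al / (8 * La) * BB = EE"
proof -
  show a: "aa > 0" "dl > 0" unfolding aa_def dl_def using al_pos la_pos La_pos by auto
  show x: "xi \<ge> 0" unfolding xi_def using al_pos La_pos h_pos K_pos eta_nn by auto
  show e: "EE \<ge> 0" unfolding EE_def using x a C_nn by auto
  show "BB \<ge> 0" unfolding BB_def using e La_pos al_pos by auto
  show "aa * h \<le> 1/4" unfolding aa_def using hal La_pos by (simp add: field_simps)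
  show "64 * La * xi \<le> al * la" using cxi unfolding xi_def .
  show "al / (8 * La) * BB = EE" unfolding BB_def using al_pos La_pos by (simp add: field_simps)
qed

lemma V_bounds: "la * (norm v)\<^sup>2 \<le> V v" "V v \<le> La * (norm v)\<^sup>2"
proof -
  show "la * (norm v)\<^sup>2 \<le> V v" unfolding V_def by (rule Vlow)
  have "\<bar>V v\<bar> \<le> La * norm v * norm v" unfolding V_def by (rule Vup)
  then show "V v \<le> La * (norm v)\<^sup>2" by (simp add: power2_eq_square mult.assoc)
qed

lemma one_step:
  fixes Phi :: "real \<Rightarrow> real"
  assumes Phi_def: "\<And>t. Phi t = V (z 0) * exp (- aa * t) + BB"
    and s0: "0 \<le> s" and sr: "s \<le> r" and rh: "r \<le> s + h"
    and IH: "\<forall>q\<in>{0..s}. V (z q) \<le> Phi q"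
  shows "V (z r) \<le> Phi r"
proof -
  note cf = consts_facts
  have V0: "V (z 0) \<ge> 0" using V_bounds(1)[of "z 0"] la_pos by (smt (verit) mult_nonneg_nonneg zero_le_power2)
  have PhiB: "Phi s \<ge> BB" using Phi_def V0 by simp
  have Phi0: "Phi s \<ge> 0" using PhiB cf by linarith
  define Pb where "Pb = sqrt (2 * Phi s / la)"
  have Pb0: "Pb \<ge> 0" unfolding Pb_def using Phi0 la_pos by simp
  have Pb2: "Pb\<^sup>2 = 2 * Phi s / la" unfolding Pb_def using Phi0 la_pos by simp
  have win: "\<forall>q\<in>{max 0 (s-2*h)..s}. norm (z q) \<le> Pb"
  proof
    fix q assume q: "q \<in> {max 0 (s-2*h)..s}"
    have "exp (aa * (s - q)) \<le> 2"
    proof -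
      have "aa * (s - q) \<le> aa * (2 * h)" using q cf(1) by (intro mult_left_mono) auto
      then have "aa * (s - q) \<le> 1/2" using cf(6) by linarith
      moreover have "aa * (s - q) \<ge> 0" using q cf(1) by auto
      ultimately show ?thesis using exp_bound_half[of "aa * (s - q)"] by simp
    qed
    moreover have "exp (- aa * q) = exp (aa * (s - q)) * exp (- aa * s)"
      by (simp add: exp_add[symmetric] algebra_simps)
    ultimately have "exp (- aa * q) \<le> 2 * exp (- aa * s)"
      by (simp add: mult_right_mono)
    then have "V (z 0) * exp (- aa * q) \<le> V (z 0) * (2 * exp (- aa * s))"
      using V0 by (rule mult_left_mono)
    then have "Phi q \<le> 2 * Phi s" using Phi_def cf(5) by (simp add: algebra_simps)
    moreover have "V (z q) \<le> Phi q" using IH q by auto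
    moreover have "la * (norm (z q))\<^sup>2 \<le> V (z q)" by (rule V_bounds)
    ultimately have "la * (norm (z q))\<^sup>2 \<le> 2 * Phi s" by linarith
    then have "(norm (z q))\<^sup>2 \<le> 2 * Phi s / la" using la_pos by (simp add: field_simps)
    then show "norm (z q) \<le> Pb" unfolding Pb_def by (rule real_le_rsqrt)
  qed
  have st: "V (z r) \<le> V (z s) + (r - s) * (- al * (norm (z s))\<^sup>2 + xi * (Pb+1)\<^sup>2 + 2*C*(Pb+1))"
    by (rule step[OF s0 sr rh Pb0 win])
  have X: "xi * (Pb+1)\<^sup>2 + 2*C*(Pb+1) \<le> aa * Phi s"
  proof -
    have amgm: "2 * C * Pb \<le> dl * Pb\<^sup>2 + C\<^sup>2 / dl"
    proof -
      have "0 \<le> (dl * Pb - C)\<^sup>2 / dl" using cf(2) by simp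
      also have "(dl * Pb - C)\<^sup>2 / dl = dl * Pb\<^sup>2 - 2 * C * Pb + C\<^sup>2 / dl"
        using cf(2) by (simp add: power2_eq_square field_simps)
      finally show ?thesis by linarith
    qed
    have sq: "xi * (Pb+1)\<^sup>2 \<le> xi * (2 * Pb\<^sup>2 + 2)"
    proof (rule mult_left_mono[OF _ cf(3)])
      have "0 \<le> (Pb - 1)\<^sup>2" by simp
      then show "(Pb+1)\<^sup>2 \<le> 2 * Pb\<^sup>2 + 2" by (simp add: power2_eq_square algebra_simps)
    qed
    have "xi * (Pb+1)\<^sup>2 + 2*C*(Pb+1) \<le> (2 * xi + dl) * Pb\<^sup>2 + EE"
      using sq amgm unfolding EE_def by (simp add: algebra_simps)
    also have "(2 * xi + dl) * Pb\<^sup>2 = (2 * xi + dl) * 2 / la * Phi s" unfolding Pb2 by simp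
    also have "\<dots> \<le> al / (8 * La) * Phi s"
    proof (rule mult_right_mono[OF _ Phi0])
      have "(2 * xi + dl) * 2 / la = 4 * xi / la + al / (16 * La)"
        unfolding dl_def using la_pos La_pos by (simp add: field_simps)
      moreover have "4 * xi / la \<le> al / (16 * La)"
        using cf(7) la_pos La_pos by (simp add: field_simps)
      ultimately show "(2 * xi + dl) * 2 / la \<le> al / (8 * La)" by simp
    qed
    also have "EE \<le> al / (8 * La) * Phi s"
    proof -
      have "al / (8 * La) * BB \<le> al / (8 * La) * Phi s"
        by (rule mult_left_mono[OF PhiB]) (use al_pos La_pos in simp)
      then show ?thesis using cf(8) by simp
    qed
    then have "al / (8 * La) * Phi s + EE \<le> aa * Phi s"
      unfolding aa_def by (simp add: field_simps)
    finally show ?thesis by simp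
  qed
  have rs1: "0 \<le> r - s" using sr by simp
  have "aa * (r - s) \<le> aa * h" using rh cf(1) by (intro mult_left_mono) auto
  then have rs: "0 \<le> r - s" "aa * (r - s) \<le> 1/4" using rs1 cf(6) by auto
  have main: "V (z r) \<le> (1 - aa * (r - s)) * Phi s"
  proof (cases "2 * V (z s) \<ge> Phi s")
    case True
    have "La * (norm (z s))\<^sup>2 \<ge> Phi s / 2" using V_bounds(2)[of "z s"] True by linarith
    then have "(norm (z s))\<^sup>2 \<ge> Phi s / (2 * La)" using La_pos by (simp add: field_simps)
    then have "al * (norm (z s))\<^sup>2 \<ge> al * (Phi s / (2 * La))" using al_pos by (intro mult_left_mono) auto
    then have "- al * (norm (z s))\<^sup>2 \<le> - 2 * aa * Phi s" unfolding aa_def by (simp add: field_simps)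
    then have "- al * (norm (z s))\<^sup>2 + xi * (Pb+1)\<^sup>2 + 2*C*(Pb+1) \<le> - aa * Phi s" using X by linarith
    then have "(r - s) * (- al * (norm (z s))\<^sup>2 + xi * (Pb+1)\<^sup>2 + 2*C*(Pb+1)) \<le> (r - s) * (- aa * Phi s)"
      using rs(1) by (rule mult_left_mono)
    moreover have "V (z s) \<le> Phi s" using IH s0 by auto
    ultimately show ?thesis using st by (simp add: algebra_simps)
  next
    case False
    have "- al * (norm (z s))\<^sup>2 \<le> 0" using al_pos by simp
    then have "(r - s) * (- al * (norm (z s))\<^sup>2 + xi * (Pb+1)\<^sup>2 + 2*C*(Pb+1)) \<le> (r - s) * (aa * Phi s)"
      using X rs(1) by (intro mult_left_mono) auto
    moreover have "(r - s) * (aa * Phi s) \<le> 1/4 * Phi s"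
    proof -
      have "(aa * (r - s)) * Phi s \<le> 1/4 * Phi s" by (rule mult_right_mono[OF rs(2) Phi0])
      then show ?thesis by (simp add: algebra_simps)
    qed
    moreover have "(1 - aa * (r - s)) * Phi s \<ge> 3/4 * Phi s"
      using rs(2) Phi0 by (intro mult_right_mono) auto
    ultimately show ?thesis using st False by linarith
  qed
  also have "\<dots> \<le> exp (- aa * (r - s)) * Phi s"
    by (rule mult_right_mono[OF _ Phi0]) (use exp_ge_add_one_self[of "- aa * (r - s)"] in simp)
  also have "\<dots> \<le> Phi r"
  proof -
    have "exp (- aa * (r - s)) * Phi s = V (z 0) * exp (- aa * r) + exp (- aa * (r - s)) * BB"
    proof -
      have "exp (- aa * (r - s)) * exp (- aa * s) = exp (- aa * r)"
        by (simp add: exp_add[symmetric] algebra_simps)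
      then show ?thesis unfolding Phi_def by (simp add: algebra_simps)
    qed
    moreover have "exp (- aa * (r - s)) \<le> 1" using rs cf(1) by simp
    moreover have "exp (- aa * (r - s)) * BB \<le> 1 * BB" by (rule mult_right_mono) (use calculation cf(5) in auto)
    ultimately show ?thesis unfolding Phi_def by simp
  qed
  finally show ?thesis .
qed

theorem decay:
  assumes t0: "t \<ge> 0"
  shows "V (z t) \<le> V (z 0) * exp (- aa * t) + BB"
proof -
  define Phi where "Phi t = V (z 0) * exp (- aa * t) + BB" for t
  have all: "\<forall>q\<in>{0..real k * h}. V (z q) \<le> Phi q" for k :: nat
  proof (induction k)
    case 0
    then show ?case unfolding Phi_def using consts_facts(5) by auto
  next
    case (Suc k)
    show ?case
    proof
      fix q assume q: "q \<in> {0..real (Suc k) * h}"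
      show "V (z q) \<le> Phi q"
      proof (cases "q \<le> real k * h")
        case True then show ?thesis using Suc q by auto
      next
        case False
        show ?thesis
          by (rule one_step[of Phi "real k * h" q]) (use Phi_def Suc False q h_pos in \<open>auto simp: algebra_simps\<close>)
      qed
    qed
  qed
  obtain k :: nat where "t / h \<le> real k" using real_arch_simple by blast
  then have "t \<le> real k * h" using h_pos by (simp add: field_simps)
  then show ?thesis using all[of k] t0 unfolding Phi_def by auto
qed

end

(* ---- Plant ---- *)

lemma int_from0:
  fixes f :: "real \<Rightarrow> 'a::banach"
  assumes I: "\<And>t. t \<ge> 0 \<Longrightarrow> (f has_integral (X t - X 0)) {0..t}" and s0: "0 \<le> s" and st: "s \<le> t"
  shows "(f has_integral (X t - X s)) {s..t}"
proof -
  have it: "f integrable_on {0..t}" using I[of t] s0 st by auto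
  have "f integrable_on {s..t}" by (rule integrable_subinterval_real[OF it]) (use s0 in auto)
  moreover have "integral {0..s} f + integral {s..t} f = integral {0..t} f"
    by (rule Henstock_Kurzweil_Integration.integral_combine[OF s0 st it])
  moreover have "integral {0..s} f = X s - X 0" using I[of s] s0 by (simp add: integral_unique)
  moreover have "integral {0..t} f = X t - X 0" using I[of t] s0 st by (simp add: integral_unique)
  ultimately show ?thesis by (metis add_diff_cancel_left' diff_diff_eq2 add.commute has_integral_integrable_integral
      diff_add_cancel eq_diff_eq)
qed

lemma mvb: "(\<And>v. norm (M *v v) \<le> m * norm v) \<Longrightarrow> norm v \<le> b \<Longrightarrow> 0 \<le> m \<Longrightarrow> norm (M *v v) \<le> m * b"
  by (meson mult_left_mono order_trans)

lemma tri_add: "norm a \<le> x \<Longrightarrow> norm b \<le> y \<Longrightarrow> norm (a + b) \<le> x + y"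
  by (meson add_mono norm_triangle_ineq order_trans)

lemma tri_diff: "norm a \<le> x \<Longrightarrow> norm b \<le> y \<Longrightarrow> norm (a - b) \<le> x + y"
  by (meson add_mono norm_triangle_ineq4 order_trans)

locale sys =
  fixes A :: "real^'nx^'nx" and B :: "real^'nu^'nx" and C :: "real^'nx^'ny"
    and Cq :: "real^'nx^'nq" and E :: "real^'np^'nx" and Ew :: "real^'nw^'nx"
    and Fw :: "real^'nw^'ny" and p :: "real^'nq \<Rightarrow> real^'np"
    and K1 :: "real^'nx^'nu" and K2 :: "real^'np^'nu"
    and L1 :: "real^'ny^'nq" and L2 :: "real^'ny^'nx"
    and P :: "real^('nx + 'nx)^('nx + 'nx)"
    and \<alpha>0 \<mu> \<omega>0 m la :: real
  assumes p0: "p 0 = 0"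
    and plip: "\<And>a b. norm (p a - p b) \<le> m * norm (a - b)"
    and \<omega>0_pos: "\<omega>0 > 0" and \<alpha>0_pos: "\<alpha>0 > 0" and \<mu>_pos: "\<mu> > 0" and m1: "m \<ge> 1"
    and la_pos: "la > 0" and Vlow: "\<And>v. la * (norm v)\<^sup>2 \<le> v \<bullet> (P *v v)"
    and Psym: "\<And>a b. a \<bullet> (P *v b) = b \<bullet> (P *v a)"
    and mA: "\<And>v. norm (A *v v) \<le> m * norm v"
    and mB: "\<And>v. norm (B *v v) \<le> m * norm v"
    and mC: "\<And>v. norm (C *v v) \<le> m * norm v"
    and mCq: "\<And>v. norm (Cq *v v) \<le> m * norm v"
    and mE: "\<And>v. norm (E *v v) \<le> m * norm v"
    and mEw: "\<And>v. norm (Ew *v v) \<le> m * norm v"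
    and mFw: "\<And>v. norm (Fw *v v) \<le> m * norm v"
    and mK1: "\<And>v. norm (K1 *v v) \<le> m * norm v"
    and mK2: "\<And>v. norm (K2 *v v) \<le> m * norm v"
    and mL1: "\<And>v. norm (L1 *v v) \<le> m * norm v"
    and mL2: "\<And>v. norm (L2 *v v) \<le> m * norm v"
    and mP: "\<And>v. norm (P *v v) \<le> m * norm v"
    and dissip: "\<And>x xh w.
       let u = K1 *v xh + K2 *v p (Cq *v xh);
           y = C *v x + Fw *v w;
           xd = A *v x + B *v u + E *v p (Cq *v x) + Ew *v w;
           xhd = A *v xh + B *v u + E *v p (Cq *v xh + L1 *v (C *v xh - y)) + L2 *v (C *v xh - y);
           z = cat x (x - xh);
           zd = cat xd (xd - xhd)
       in zd \<bullet> (P *v z) + z \<bullet> (P *v zd) \<le> - \<alpha>0 * (z \<bullet> (P *v z)) + \<mu> * (norm w)\<^sup>2"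
begin

lemma m0: "m \<ge> 0" using m1 by simp

lemma pb: "norm v \<le> b \<Longrightarrow> norm (p v) \<le> m * b"
  using plip[of v 0] p0 m0 by (simp add: mvb) (meson mult_left_mono order_trans)

lemma pdb: "norm (a - c) \<le> b \<Longrightarrow> norm (p a - p c) \<le> m * b"
  using plip[of a c] m0 by (meson mult_left_mono order_trans)

definition cy where "cy = m + m * \<omega>0"
definition cu where "cu = 4 * m + m * (m * (m * 4))"
definition cx where "cx = m + m * cu + m * (m * m) + m * \<omega>0"
definition ch where "ch = m * 2 + m * cu + m * (m * (m * 2 + m * (m * 2 + (2 * cy + 1)))) + m * (m * 2 + (2 * cy + 1))"
definition Kc where "Kc = 2 * cx + ch"
definition Le where "Le = 3 * (m * (m + m * (m * m))) + (m * (m * m) + m)"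
definition eta where "eta \<sigma> h = 2 * m * Le * (2 + m) * (\<sigma> + h * Kc)"
definition Cc where "Cc = 2 * m * Le * (Kc * (2 + m) + 2 + 3 * m * \<omega>0) + \<mu> * \<omega>0\<^sup>2"

lemma consts_pos: "cy \<ge> 0" "cu \<ge> 0" "cx \<ge> 0" "ch \<ge> 0" "Kc > 0" "Le \<ge> 0" "Cc \<ge> 0"
proof -
  show a: "cy \<ge> 0" "cu \<ge> 0" unfolding cy_def cu_def using m0 \<omega>0_pos by auto
  show b: "cx \<ge> 0" "ch \<ge> 0" unfolding cx_def ch_def using a m0 \<omega>0_pos by auto
  have "cx \<ge> m" unfolding cx_def using a m0 \<omega>0_pos by auto
  then show "Kc > 0" unfolding Kc_def using b m1 by auto
  show c: "Le \<ge> 0" unfolding Le_def using m0 by auto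
  show "Cc \<ge> 0" unfolding Cc_def using c m0 \<omega>0_pos \<open>Kc > 0\<close> \<mu>_pos by auto
qed

end

locale sol = sys +
  fixes h \<sigma> :: real and x xh :: "real \<Rightarrow> real^'nx" and w :: "real \<Rightarrow> real^'nw"
    and ty tu :: "nat \<Rightarrow> ereal" and ys :: "real \<Rightarrow> real^'ny" and xhs :: "real \<Rightarrow> real^'nx"
  assumes h_pos: "h > 0" and h1: "h \<le> 1" and \<sigma>_pos: "\<sigma> > 0" and \<sigma>1: "\<sigma> \<le> 1"
    and wb: "\<And>t. t \<ge> 0 \<Longrightarrow> norm (w t) \<le> \<omega>0"
    and trY: "trig h \<sigma> 1 (\<lambda>t. C *v x t + Fw *v w t) ty"
    and hdY: "held ty (\<lambda>t. C *v x t + Fw *v w t) ys"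
    and trU: "trig h \<sigma> 1 xh tu" and hdU: "held tu xh xhs"
    and intx: "\<And>t. t \<ge> 0 \<Longrightarrow> ((\<lambda>s. A *v x s + B *v (K1 *v xhs s + K2 *v p (Cq *v xhs s))
                 + E *v p (Cq *v x s) + Ew *v w s) has_integral (x t - x 0)) {0..t}"
    and intxh: "\<And>t. t \<ge> 0 \<Longrightarrow> ((\<lambda>s. A *v xh s + B *v (K1 *v xhs s + K2 *v p (Cq *v xhs s))
                 + E *v p (Cq *v xh s + L1 *v (C *v xh s - ys s))
                 + L2 *v (C *v xh s - ys s)) has_integral (xh t - xh 0)) {0..t}"
begin

definition y where "y t = C *v x t + Fw *v w t"
definition u where "u s = K1 *v xhs s + K2 *v p (Cq *v xhs s)"
definition fx where "fx s = A *v x s + B *v u s + E *v p (Cq *v x s) + Ew *v w s"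
definition fh where "fh s = A *v xh s + B *v u s + E *v p (Cq *v xh s + L1 *v (C *v xh s - ys s))
                 + L2 *v (C *v xh s - ys s)"
definition z where "z t = cat (x t) (x t - xh t)"
definition G where "G s = cat (fx s) (fx s - fh s)"

lemma zint: "0 \<le> s \<Longrightarrow> s \<le> t \<Longrightarrow> (G has_integral (z t - z s)) {s..t}"
proof -
  assume s0: "0 \<le> s" and st: "s \<le> t"
  have a: "(fx has_integral (x t - x s)) {s..t}"
    by (rule int_from0[OF _ s0 st]) (use intx in \<open>simp add: fx_def u_def\<close>)
  have b: "(fh has_integral (xh t - xh s)) {s..t}"
    by (rule int_from0[OF _ s0 st]) (use intxh in \<open>simp add: fh_def u_def\<close>)
  have "((\<lambda>s. cat (fx s) (fx s - fh s)) has_integral cat (x t - x s) ((x t - x s) - (xh t - xh s))) {s..t}"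
    by (rule has_integral_cat[OF a has_integral_diff[OF a b]])
  moreover have "cat (x t - x s) ((x t - x s) - (xh t - xh s)) = z t - z s"
    unfolding z_def by (simp add: cat_diff[symmetric] algebra_simps)
  ultimately show ?thesis unfolding G_def by simp
qed

lemma zcont: "T \<ge> 0 \<Longrightarrow> continuous_on {0..T} z"
proof -
  assume T0: "T \<ge> 0"
  have it: "G integrable_on {0..T}" using zint[of 0 T] T0 by auto
  have c: "continuous_on {0..T} (\<lambda>t. z 0 + integral {0..t} G)"
    by (intro continuous_intros indefinite_integral_continuous_1[OF it])
  have "\<And>t. t \<in> {0..T} \<Longrightarrow> z t = z 0 + integral {0..t} G"
  proof -
    fix t assume "t \<in> {0..T}"
    then have "integral {0..t} G = z t - z 0" using zint[of 0 t] by (simp add: integral_unique)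
    then show "z t = z 0 + integral {0..t} G" by simp
  qed
  then show ?thesis using continuous_on_cong[THEN iffD1, OF refl _ c] by (metis (no_types, lifting))
qed

lemma zparts: "norm (x q) \<le> norm (z q)" "norm (x q - xh q) \<le> norm (z q)" "norm (xh q) \<le> 2 * norm (z q)"
proof -
  show a: "norm (x q) \<le> norm (z q)" unfolding z_def by (rule norm_cat_ge1)
  show b: "norm (x q - xh q) \<le> norm (z q)" unfolding z_def by (rule norm_cat_ge2)
  have "xh q = x q - (x q - xh q)" by simp
  then have "norm (xh q) \<le> norm (x q) + norm (x q - xh q)" by (metis norm_triangle_ineq4)
  then show "norm (xh q) \<le> 2 * norm (z q)" using a b by linarith
qed

lemma yb: "q \<ge> 0 \<Longrightarrow> norm (x q) \<le> N \<Longrightarrow> N \<ge> 1 \<Longrightarrow> norm (y q) \<le> cy * N"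
proof -
  assume q: "q \<ge> 0" and xq: "norm (x q) \<le> N" and N1: "N \<ge> 1"
  have "norm (w q) \<le> \<omega>0 * N" using wb[OF q] \<omega>0_pos N1
    by (smt (verit) mult_le_cancel_left1)
  then have "norm (y q) \<le> m * N + m * (\<omega>0 * N)" unfolding y_def
    by (intro tri_add mvb[OF mC] mvb[OF mFw]) (simp_all add: xq m0)
  then show ?thesis unfolding cy_def by (simp add: algebra_simps)
qed

lemma H1:
  assumes r0: "r \<ge> 0" and win: "\<forall>q\<in>{max 0 (r-h)..r}. norm (z q) \<le> M"
  shows "norm (G r) \<le> Kc * (M + 1)"
proof -
  define N where "N = M + 1"
  have rin: "r \<in> {max 0 (r-h)..r}" using r0 h_pos by auto
  have M0: "M \<ge> 0" using win rin by (meson norm_ge_zero order_trans)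
  have N1: "N \<ge> 1" using M0 N_def by simp
  have xw: "norm (x q) \<le> N" if "q \<in> {max 0 (r-h)..r}" for q
    using zparts(1)[of q] win that N_def by force
  have xhw: "norm (xh q) \<le> 2 * N" if "q \<in> {max 0 (r-h)..r}" for q
    using zparts(3)[of q] win that N_def by force
  have xhsb: "norm (xhs r) \<le> 4 * N"
  proof -
    obtain t0 where t0: "0 \<le> t0" "t0 \<le> r" "xhs r = xh t0"
      "r < t0 + h \<or> norm (xh t0 - xh r) \<le> \<sigma> * norm (xh r) + 1"
      using trig_held[OF trU hdU h_pos r0] by blast
    show ?thesis
    proof (cases "r < t0 + h")
      case True
      then have "t0 \<in> {max 0 (r-h)..r}" using t0 by auto
      then show ?thesis using xhw t0(3) N1 by force
    next
      case False
      then have d: "norm (xh t0 - xh r) \<le> \<sigma> * norm (xh r) + 1" using t0 by auto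
      have "\<sigma> * norm (xh r) \<le> norm (xh r)" using mult_right_mono[OF \<sigma>1 norm_ge_zero] by simp
      moreover have "norm (xh t0) \<le> norm (xh r) + norm (xh t0 - xh r)" by (rule norm_triangle_sub)
      moreover have "norm (xh r) \<le> 2 * M"
      proof -
        have "norm (z r) \<le> M" using win rin by blast
        then show ?thesis using zparts(3)[of r] by linarith
      qed
      ultimately show ?thesis unfolding t0(3) using d N_def by linarith
    qed
  qed
  have ysb: "norm (ys r) \<le> (2 * cy + 1) * N"
  proof -
    obtain t1 where t1: "0 \<le> t1" "t1 \<le> r" "ys r = y t1"
      "r < t1 + h \<or> norm (y t1 - y r) \<le> \<sigma> * norm (y r) + 1"
      using trig_held[OF trY hdY h_pos r0] unfolding y_def by blast
    have cy0: "cy \<ge> 0" by (rule consts_pos)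
    have yr: "norm (y r) \<le> cy * N" using yb[OF r0 xw[OF rin] N1] .
    show ?thesis
    proof (cases "r < t1 + h")
      case True
      then have "t1 \<in> {max 0 (r-h)..r}" using t1 by auto
      then have "norm (y t1) \<le> cy * N" using yb t1 xw N1 by blast
      then show ?thesis using t1(3) N1 cy0 by (smt (verit) mult_right_mono)
    next
      case False
      then have d: "norm (y t1 - y r) \<le> \<sigma> * norm (y r) + 1" using t1 by auto
      have "\<sigma> * norm (y r) \<le> norm (y r)" using mult_right_mono[OF \<sigma>1 norm_ge_zero] by simp
      moreover have "norm (y t1) \<le> norm (y r) + norm (y t1 - y r)" by (rule norm_triangle_sub)
      ultimately have "norm (y t1) \<le> 2 * (cy * N) + N" using d yr N1 by linarith
      then show ?thesis using t1(3) by (simp add: algebra_simps)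
    qed
  qed
  have ub: "norm (u r) \<le> cu * N"
  proof -
    have "norm (u r) \<le> m * (4 * N) + m * (m * (m * (4 * N)))" unfolding u_def
      by (intro tri_add mvb[OF mK1] mvb[OF mK2] pb mvb[OF mCq]) (simp_all add: xhsb m0)
    then show ?thesis unfolding cu_def by (simp add: algebra_simps)
  qed
  have fxb: "norm (fx r) \<le> cx * N"
  proof -
    have "norm (w r) \<le> \<omega>0 * N" using wb[OF r0] \<omega>0_pos N1
      by (smt (verit) mult_le_cancel_left1)
    then have "norm (fx r) \<le> m * N + m * (cu * N) + m * (m * (m * N)) + m * (\<omega>0 * N)" unfolding fx_def
      by (intro tri_add mvb[OF mA] mvb[OF mB] mvb[OF mE] mvb[OF mEw] pb mvb[OF mCq])
        (simp_all add: xw[OF rin] ub m0)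
    then show ?thesis unfolding cx_def by (simp add: algebra_simps)
  qed
  have fhb: "norm (fh r) \<le> ch * N"
  proof -
    have "norm (fh r) \<le> m * (2 * N) + m * (cu * N) + m * (m * (m * (2 * N) + m * (m * (2 * N) + (2 * cy + 1) * N)))
        + m * (m * (2 * N) + (2 * cy + 1) * N)" unfolding fh_def
      by (intro tri_add tri_diff mvb[OF mA] mvb[OF mB] mvb[OF mE] mvb[OF mL2] mvb[OF mL1] mvb[OF mC] pb mvb[OF mCq])
        (simp_all add: xhw[OF rin] ub ysb m0)
    then show ?thesis unfolding ch_def by (simp add: algebra_simps)
  qed
  have "norm (G r) \<le> norm (fx r) + norm (fx r - fh r)" unfolding G_def by (rule norm_cat_le)
  also have "\<dots> \<le> cx * N + (cx * N + ch * N)"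
    by (intro add_mono fxb tri_diff fhb)
  also have "\<dots> = Kc * (M + 1)" unfolding Kc_def N_def by (simp add: algebra_simps)
  finally show ?thesis .
qed

end


(* ---- Plant2 ---- *)

lemma cat_split_lem: "cat (a0 + a) ((a0 + a) - (b0 + b)) = cat a0 (a0 - b0) + cat a (a - b)"
proof -
  have eq: "(a0 + a) - (b0 + b) = (a0 - b0) + (a - b)" by (simp add: algebra_simps)
  show ?thesis unfolding cat_add[symmetric] eq ..
qed

context sol
begin

lemma zvar:
  assumes t00: "0 \<le> t0" and t0r: "t0 \<le> r" and rt: "r < t0 + h"
    and win2: "\<forall>q\<in>{max 0 (r-2*h)..r}. norm (z q) \<le> M"
  shows "norm (z r - z t0) \<le> h * (Kc * (M + 1))"
proof -
  have Gb: "norm (G q) \<le> Kc * (M + 1)" if q: "q \<in> {t0..r}" for q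
  proof (rule H1)
    show "q \<ge> 0" using q t00 by auto
    show "\<forall>q'\<in>{max 0 (q-h)..q}. norm (z q') \<le> M" using win2 q rt by auto
  qed
  have "r \<in> {max 0 (r-2*h)..r}" using t00 t0r h_pos by auto
  then have "norm (z r) \<le> M" using win2 by blast
  then have M0: "M \<ge> 0" by (meson norm_ge_zero order_trans)
  have K0: "Kc * (M + 1) \<ge> 0" using consts_pos(5) M0 by simp
  have "norm (z r - z t0) \<le> Kc * (M + 1) * (r - t0)"
    using has_integral_bound[OF K0 zint[OF t00 t0r, folded cbox_interval]] Gb t0r
    by (auto simp: cbox_interval)
  also have "\<dots> \<le> Kc * (M + 1) * h" using rt K0 by (intro mult_left_mono) auto
  finally show ?thesis by (simp add: mult.commute)
qed

lemma H2:
  assumes r0: "r \<ge> 0" and win2: "\<forall>q\<in>{max 0 (r-2*h)..r}. norm (z q) \<le> M"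
  shows "2 * (G r \<bullet> (P *v z r)) \<le> - (\<alpha>0 * la) * (norm (z r))\<^sup>2 + eta \<sigma> h * M\<^sup>2 + Cc * (M + 1)"
proof -
  define N where "N = M + 1"
  have rin: "r \<in> {max 0 (r-2*h)..r}" using r0 h_pos by auto
  have nM: "norm (z r) \<le> M" using win2 rin by blast
  have M0: "M \<ge> 0" using nM by (meson norm_ge_zero order_trans)
  define u0 where "u0 = K1 *v xh r + K2 *v p (Cq *v xh r)"
  define xd0 where "xd0 = A *v x r + B *v u0 + E *v p (Cq *v x r) + Ew *v w r"
  define xhd0 where "xhd0 = A *v xh r + B *v u0 + E *v p (Cq *v xh r + L1 *v (C *v xh r - y r)) + L2 *v (C *v xh r - y r)"
  define zd0 where "zd0 = cat xd0 (xd0 - xhd0)"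
  have dis: "zd0 \<bullet> (P *v z r) + z r \<bullet> (P *v zd0) \<le> - \<alpha>0 * (z r \<bullet> (P *v z r)) + \<mu> * (norm (w r))\<^sup>2"
    using dissip[where x="x r" and xh="xh r" and w="w r"] unfolding Let_def zd0_def xd0_def xhd0_def u0_def z_def y_def by simp
  have dis2: "2 * (zd0 \<bullet> (P *v z r)) \<le> - (\<alpha>0 * la) * (norm (z r))\<^sup>2 + \<mu> * \<omega>0\<^sup>2 * (M + 1)"
  proof -
    have "\<alpha>0 * (la * (norm (z r))\<^sup>2) \<le> \<alpha>0 * (z r \<bullet> (P *v z r))"
      using Vlow \<alpha>0_pos by (intro mult_left_mono) auto
    moreover have "(norm (w r))\<^sup>2 \<le> \<omega>0\<^sup>2" using wb[OF r0] by (simp add: power_mono)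
    then have "\<mu> * (norm (w r))\<^sup>2 \<le> \<mu> * \<omega>0\<^sup>2" using \<mu>_pos by simp
    moreover have "\<mu> * \<omega>0\<^sup>2 * 1 \<le> \<mu> * \<omega>0\<^sup>2 * (M + 1)" by (rule mult_left_mono) (use M0 \<mu>_pos in auto)
    ultimately show ?thesis using dis Psym[of "z r" zd0] by (simp add: algebra_simps)
  qed
  define eu where "eu = xhs r - xh r"
  define ey where "ey = ys r - y r"
  define du where "du = u r - u0"
  have dub: "norm du \<le> (m + m * (m * m)) * norm eu"
  proof -
    have e: "du = K1 *v eu + K2 *v (p (Cq *v xhs r) - p (Cq *v xh r))"
      unfolding du_def u_def u0_def eu_def by (simp add: matrix_vector_mult_diff_distrib algebra_simps)
    have b: "norm (K1 *v eu + K2 *v (p (Cq *v xhs r) - p (Cq *v xh r))) \<le> m * norm eu + m * (m * (m * norm eu))"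
      by (intro tri_add mvb[OF mK1] mvb[OF mK2] pdb mvb[OF mCq])
        (simp_all add: m0 eu_def matrix_vector_mult_diff_distrib[symmetric] mCq)
    have "m * norm eu + m * (m * (m * norm eu)) = (m + m * (m * m)) * norm eu" by (simp add: algebra_simps)
    then show ?thesis using b[folded e] by simp
  qed
  define dG where "dG = cat (B *v du) (B *v du - (B *v du + E *v (p (Cq *v xh r + L1 *v (C *v xh r - ys r)) - p (Cq *v xh r + L1 *v (C *v xh r - y r))) - L2 *v ey))"
  have GdG: "G r = zd0 + dG"
  proof -
    have "fx r = xd0 + B *v du" unfolding fx_def xd0_def du_def by (simp add: matrix_vector_mult_diff_distrib)
    moreover have "fh r = xhd0 + (B *v du + E *v (p (Cq *v xh r + L1 *v (C *v xh r - ys r)) - p (Cq *v xh r + L1 *v (C *v xh r - y r))) - L2 *v ey)"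
      unfolding fh_def xhd0_def du_def ey_def by (simp add: matrix_vector_mult_diff_distrib algebra_simps)
    ultimately show ?thesis unfolding G_def zd0_def dG_def by (simp only: cat_split_lem)
  qed
  have dGb: "norm dG \<le> Le * (norm eu + norm ey)"
  proof -
    have a: "norm (B *v du) \<le> m * ((m + m * (m * m)) * norm eu)" by (rule mvb[OF mB dub m0])
    have b: "norm (B *v du + E *v (p (Cq *v xh r + L1 *v (C *v xh r - ys r)) - p (Cq *v xh r + L1 *v (C *v xh r - y r))) - L2 *v ey)
       \<le> m * ((m + m * (m * m)) * norm eu) + m * (m * (m * norm ey)) + m * norm ey"
    proof -
      have e1: "(Cq *v xh r + L1 *v (C *v xh r - ys r)) - (Cq *v xh r + L1 *v (C *v xh r - y r))
          = L1 *v ((C *v xh r - ys r) - (C *v xh r - y r))"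
        by (simp only: matrix_vector_mult_diff_distrib) simp
      have e2: "(C *v xh r - ys r) - (C *v xh r - y r) = - ey" unfolding ey_def by simp
      have pa: "norm ((Cq *v xh r + L1 *v (C *v xh r - ys r)) - (Cq *v xh r + L1 *v (C *v xh r - y r))) \<le> m * norm ey"
        unfolding e1 e2 using mL1[of "- ey"] by simp
      have pe: "norm (E *v (p (Cq *v xh r + L1 *v (C *v xh r - ys r)) - p (Cq *v xh r + L1 *v (C *v xh r - y r)))) \<le> m * (m * (m * norm ey))"
        by (rule mvb[OF mE pdb[OF pa] m0])
      show ?thesis by (rule tri_diff[OF tri_add[OF a pe] mL2])
    qed
    have "norm dG \<le> norm (B *v du) + norm (B *v du - (B *v du + E *v (p (Cq *v xh r + L1 *v (C *v xh r - ys r)) - p (Cq *v xh r + L1 *v (C *v xh r - y r))) - L2 *v ey))"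
      unfolding dG_def by (rule norm_cat_le)
    also have "\<dots> \<le> m * ((m + m * (m * m)) * norm eu) + (m * ((m + m * (m * m)) * norm eu) + (m * ((m + m * (m * m)) * norm eu) + m * (m * (m * norm ey)) + m * norm ey))"
      by (intro add_mono a tri_diff b)
    also have "\<dots> = (3 * (m * (m + m * (m * m)))) * norm eu + (m * (m * m) + m) * norm ey"
      by (simp add: algebra_simps)
    also have "\<dots> \<le> Le * norm eu + Le * norm ey"
    proof (rule add_mono)
      show "3 * (m * (m + m * (m * m))) * norm eu \<le> Le * norm eu"
        by (rule mult_right_mono) (use m0 in \<open>auto simp: Le_def\<close>)
      show "(m * (m * m) + m) * norm ey \<le> Le * norm ey"
        by (rule mult_right_mono) (use m0 in \<open>auto simp: Le_def\<close>)
    qed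
    also have "\<dots> = Le * (norm eu + norm ey)" by (simp add: algebra_simps)
    finally show ?thesis .
  qed
  have K0: "Kc \<ge> 0" using consts_pos(5) by simp
  have eub: "norm eu \<le> 2 * \<sigma> * M + 1 + 2 * (h * (Kc * N))"
  proof -
    obtain t0 where t0: "0 \<le> t0" "t0 \<le> r" "xhs r = xh t0"
      "r < t0 + h \<or> norm (xh t0 - xh r) \<le> \<sigma> * norm (xh r) + 1"
      using trig_held[OF trU hdU h_pos r0] by blast
    have hk: "h * (Kc * N) \<ge> 0" using h_pos K0 M0 N_def by simp
    have sm: "\<sigma> * M \<ge> 0" using \<sigma>_pos M0 by simp
    show ?thesis
    proof (cases "r < t0 + h")
      case True
      have zv: "norm (z r - z t0) \<le> h * (Kc * N)" using zvar[OF t0(1,2) True win2] N_def by simp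
      have zd: "z t0 - z r = cat (x t0 - x r) ((x t0 - xh t0) - (x r - xh r))" unfolding z_def by (simp add: cat_diff)
      have "norm (x t0 - x r) \<le> norm (z r - z t0)"
        using norm_cat_ge1 zd by (metis norm_minus_commute)
      moreover have "norm ((x t0 - xh t0) - (x r - xh r)) \<le> norm (z r - z t0)"
        using norm_cat_ge2 zd by (metis norm_minus_commute)
      moreover have "xh t0 - xh r = (x t0 - x r) - ((x t0 - xh t0) - (x r - xh r))" by simp
      ultimately have "norm (xh t0 - xh r) \<le> 2 * norm (z r - z t0)"
        by (metis (no_types, lifting) tri_diff mult_2)
      then show ?thesis unfolding eu_def t0(3) using zv sm by (simp add: norm_minus_commute)
    next
      case False
      then have d: "norm (xh t0 - xh r) \<le> \<sigma> * norm (xh r) + 1" using t0 by auto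
      have "norm (xh r) \<le> 2 * M" using zparts(3)[of r] nM by linarith
      then have "\<sigma> * norm (xh r) \<le> \<sigma> * (2 * M)" using \<sigma>_pos by (intro mult_left_mono) auto
      then show ?thesis unfolding eu_def t0(3) using d hk by (simp add: norm_minus_commute)
    qed
  qed
  have eyb: "norm ey \<le> \<sigma> * m * M + m * \<omega>0 + 1 + m * (h * (Kc * N)) + 2 * m * \<omega>0"
  proof -
    obtain t1 where t1: "0 \<le> t1" "t1 \<le> r" "ys r = y t1"
      "r < t1 + h \<or> norm (y t1 - y r) \<le> \<sigma> * norm (y r) + 1"
      using trig_held[OF trY hdY h_pos r0] unfolding y_def by blast
    have hk: "m * (h * (Kc * N)) \<ge> 0" using h_pos K0 M0 N_def m0 by simp
    have smm: "\<sigma> * m * M \<ge> 0" using \<sigma>_pos M0 m0 by simp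
    have mw: "m * \<omega>0 \<ge> 0" using m0 \<omega>0_pos by simp
    show ?thesis
    proof (cases "r < t1 + h")
      case True
      have zv: "norm (z r - z t1) \<le> h * (Kc * N)" using zvar[OF t1(1,2) True win2] N_def by simp
      have zd1: "z r - z t1 = cat (x r - x t1) ((x r - xh r) - (x t1 - xh t1))" unfolding z_def by (simp add: cat_diff)
      have "norm (x t1 - x r) \<le> norm (z r - z t1)"
        unfolding zd1 using norm_cat_ge1[of "x r - x t1" "(x r - xh r) - (x t1 - xh t1)"] by (simp add: norm_minus_commute)
      then have xv: "norm (x t1 - x r) \<le> h * (Kc * N)" using zv by linarith
      have "norm (w t1 - w r) \<le> \<omega>0 + \<omega>0" by (rule tri_diff) (use wb t1 r0 in auto)
      then have nb0: "norm (C *v (x t1 - x r) + Fw *v (w t1 - w r)) \<le> m * (h * (Kc * N)) + m * (\<omega>0 + \<omega>0)"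
        by (intro tri_add mvb[OF mC xv m0] mvb[OF mFw _ m0])
      have eqy: "y t1 - y r = C *v (x t1 - x r) + Fw *v (w t1 - w r)"
        unfolding y_def by (simp add: matrix_vector_mult_diff_distrib)
      have nb: "norm (y t1 - y r) \<le> m * (h * (Kc * N)) + m * (\<omega>0 + \<omega>0)" unfolding eqy by (rule nb0)
      have "m * (\<omega>0 + \<omega>0) = 2 * m * \<omega>0" by simp
      then show ?thesis unfolding ey_def t1(3) using nb smm mw by linarith
    next
      case False
      then have d: "norm (y t1 - y r) \<le> \<sigma> * norm (y r) + 1" using t1 by auto
      have xr: "norm (x r) \<le> M" using zparts(1)[of r] nM by linarith
      have "norm (y r) \<le> m * M + m * \<omega>0" unfolding y_def
        by (intro tri_add mvb[OF mC xr m0] mvb[OF mFw wb[OF r0] m0])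
      then have "\<sigma> * norm (y r) \<le> \<sigma> * (m * M + m * \<omega>0)" using \<sigma>_pos by (intro mult_left_mono) auto
      moreover have "\<sigma> * (m * \<omega>0) \<le> m * \<omega>0" using mult_right_mono[OF \<sigma>1 mw] by simp
      ultimately show ?thesis unfolding ey_def t1(3) using d hk mw by (simp add: norm_minus_commute algebra_simps)
    qed
  qed
  define S where "S = norm eu + norm ey"
  define Sb where "Sb = \<sigma> * (2 + m) * M + h * Kc * (2 + m) * N + (2 + 3 * m * \<omega>0)"
  have SSb: "S \<le> Sb" using eub eyb unfolding S_def Sb_def by (simp add: algebra_simps)
  have S0: "S \<ge> 0" unfolding S_def by simp
  have Sn: "S * norm (z r) \<le> Sb * M" by (rule mult_mono[OF SSb nM]) (use S0 SSb in auto)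
  have LeS: "Le \<ge> 0" using consts_pos(6) .
  have inner_b: "2 * (dG \<bullet> (P *v z r)) \<le> 2 * m * Le * (S * norm (z r))"
  proof -
    have "dG \<bullet> (P *v z r) \<le> norm dG * norm (P *v z r)" by (rule norm_cauchy_schwarz)
    also have "\<dots> \<le> (Le * S) * (m * norm (z r))"
      using dGb mP[of "z r"] LeS by (intro mult_mono) (auto simp: S_def)
    finally show ?thesis by (simp add: algebra_simps)
  qed
  have tail: "2 * m * Le * (Sb * M) \<le> eta \<sigma> h * M\<^sup>2 + 2 * m * Le * (Kc * (2 + m) + 2 + 3 * m * \<omega>0) * (M + 1)"
  proof -
    have eqL: "2 * m * Le * (Sb * M) = eta \<sigma> h * M\<^sup>2 + 2 * m * Le * (h * Kc * (2 + m) * M + (2 + 3 * m * \<omega>0) * M)"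
      unfolding Sb_def eta_def N_def by (simp add: power2_eq_square algebra_simps)
    have a: "h * Kc * (2 + m) * M \<le> Kc * (2 + m) * (M + 1)"
    proof -
      have "h * (Kc * (2 + m) * M) \<le> 1 * (Kc * (2 + m) * M)"
        by (rule mult_right_mono[OF h1]) (use K0 m0 M0 in auto)
      moreover have "Kc * (2 + m) * M \<le> Kc * (2 + m) * (M + 1)" using K0 m0 by (intro mult_left_mono) auto
      ultimately show ?thesis by (simp add: algebra_simps)
    qed
    have b: "(2 + 3 * m * \<omega>0) * M \<le> (2 + 3 * m * \<omega>0) * (M + 1)" using m0 \<omega>0_pos by (intro mult_left_mono) auto
    have "2 * m * Le * (h * Kc * (2 + m) * M + (2 + 3 * m * \<omega>0) * M) \<le> 2 * m * Le * (Kc * (2 + m) * (M + 1) + (2 + 3 * m * \<omega>0) * (M + 1))"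
      using a b m0 LeS \<omega>0_pos by (intro mult_left_mono add_mono) auto
    then show ?thesis unfolding eqL by (simp add: algebra_simps)
  qed
  have "2 * (G r \<bullet> (P *v z r)) = 2 * (zd0 \<bullet> (P *v z r)) + 2 * (dG \<bullet> (P *v z r))"
    unfolding GdG by (simp add: inner_add_left algebra_simps)
  also have "\<dots> \<le> - (\<alpha>0 * la) * (norm (z r))\<^sup>2 + \<mu> * \<omega>0\<^sup>2 * (M + 1) + 2 * m * Le * (Sb * M)"
  proof -
    have "2 * m * Le * (S * norm (z r)) \<le> 2 * m * Le * (Sb * M)"
      by (rule mult_left_mono[OF Sn]) (use m0 LeS in auto)
    then show ?thesis using dis2 inner_b by linarith
  qed
  also have "\<dots> \<le> - (\<alpha>0 * la) * (norm (z r))\<^sup>2 + eta \<sigma> h * M\<^sup>2 + Cc * (M + 1)"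
  proof -
    have "Cc * (M + 1) = 2 * m * Le * (Kc * (2 + m) + 2 + 3 * m * \<omega>0) * (M + 1) + \<mu> * \<omega>0\<^sup>2 * (M + 1)"
      unfolding Cc_def by (simp add: distrib_right)
    then show ?thesis using tail by linarith
  qed
  finally show ?thesis .
qed

end


(* ---- Final ---- *)

lemma core_exists:
  fixes P :: "real^'m^'m" and al la La K C eta h :: real
  assumes al_pos: "al > 0" and la_pos: "la > 0" and La_pos: "La > 0"
    and K_pos: "K > 0" and C_nn: "C \<ge> 0" and eta_nn: "eta \<ge> 0" and h_pos: "h > 0"
    and Vlow: "\<And>v. la * (norm v)\<^sup>2 \<le> v \<bullet> (P *v v)"
    and Vup: "\<And>a b. \<bar>a \<bullet> (P *v b)\<bar> \<le> La * norm a * norm b"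
    and Psym: "\<And>a b. a \<bullet> (P *v b) = b \<bullet> (P *v a)"
    and hK: "h * K \<le> 1/4" and hal: "h * al \<le> La"
    and cxi: "64 * La * (8*al*h*K + 4*eta + 8*La*h*K\<^sup>2) \<le> al * la"
  shows "\<exists>a>0. \<exists>B\<ge>0. \<forall>(z::real \<Rightarrow> real^'m) (G::real \<Rightarrow> real^'m). (\<forall>T\<ge>0. continuous_on {0..T} z) \<and>
      (\<forall>s t. 0 \<le> s \<and> s \<le> t \<longrightarrow> (G has_integral (z t - z s)) {s..t}) \<and>
      (\<forall>r M. r \<ge> 0 \<and> (\<forall>q\<in>{max 0 (r-h)..r}. norm (z q) \<le> M) \<longrightarrow> norm (G r) \<le> K * (M + 1)) \<and>
      (\<forall>r M. r \<ge> 0 \<and> (\<forall>q\<in>{max 0 (r-2*h)..r}. norm (z q) \<le> M) \<longrightarrow>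
              2 * (G r \<bullet> (P *v z r)) \<le> - al * (norm (z r))\<^sup>2 + eta * M\<^sup>2 + C * (M + 1))
      \<longrightarrow> (\<forall>t\<ge>0. z t \<bullet> (P *v z t) \<le> z 0 \<bullet> (P *v z 0) * exp (- a * t) + B)"
proof -
  define xi where "xi = 8*al*h*K + 4*eta + 8*La*h*K\<^sup>2"
  define dl where "dl = al * la / (32 * La)"
  define EE where "EE = 2 * xi + 2 * C + C\<^sup>2 / dl"
  define BB where "BB = 8 * La * EE / al"
  define aa where "aa = al / (4 * La)"
  have aa0: "aa > 0" unfolding aa_def using al_pos La_pos by simp
  have BB0: "BB \<ge> 0" unfolding BB_def EE_def dl_def xi_def
    using al_pos la_pos La_pos h_pos K_pos eta_nn C_nn by (intro divide_nonneg_pos mult_nonneg_nonneg add_nonneg_nonneg) auto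
  have main: "\<forall>(z::real \<Rightarrow> real^'m) (G::real \<Rightarrow> real^'m). (\<forall>T\<ge>0. continuous_on {0..T} z) \<and>
      (\<forall>s t. 0 \<le> s \<and> s \<le> t \<longrightarrow> (G has_integral (z t - z s)) {s..t}) \<and>
      (\<forall>r M. r \<ge> 0 \<and> (\<forall>q\<in>{max 0 (r-h)..r}. norm (z q) \<le> M) \<longrightarrow> norm (G r) \<le> K * (M + 1)) \<and>
      (\<forall>r M. r \<ge> 0 \<and> (\<forall>q\<in>{max 0 (r-2*h)..r}. norm (z q) \<le> M) \<longrightarrow>
              2 * (G r \<bullet> (P *v z r)) \<le> - al * (norm (z r))\<^sup>2 + eta * M\<^sup>2 + C * (M + 1))
      \<longrightarrow> (\<forall>t\<ge>0. z t \<bullet> (P *v z t) \<le> z 0 \<bullet> (P *v z 0) * exp (- aa * t) + BB)"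
  proof (intro allI impI)
    fix z G :: "real \<Rightarrow> real^'m" and t :: real
    assume hyp: "(\<forall>T\<ge>0. continuous_on {0..T} z) \<and>
      (\<forall>s t. 0 \<le> s \<and> s \<le> t \<longrightarrow> (G has_integral (z t - z s)) {s..t}) \<and>
      (\<forall>r M. r \<ge> 0 \<and> (\<forall>q\<in>{max 0 (r-h)..r}. norm (z q) \<le> M) \<longrightarrow> norm (G r) \<le> K * (M + 1)) \<and>
      (\<forall>r M. r \<ge> 0 \<and> (\<forall>q\<in>{max 0 (r-2*h)..r}. norm (z q) \<le> M) \<longrightarrow>
              2 * (G r \<bullet> (P *v z r)) \<le> - al * (norm (z r))\<^sup>2 + eta * M\<^sup>2 + C * (M + 1))"
      and t0: "t \<ge> 0"
    interpret c: core P al la La K C eta h z G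
      by (unfold_locales) (use assms hyp in auto)
    have "c.V (z t) \<le> c.V (z 0) * exp (- c.aa * t) + c.BB" by (rule c.decay[OF t0])
    then show "z t \<bullet> (P *v z t) \<le> z 0 \<bullet> (P *v z 0) * exp (- aa * t) + BB"
      by (simp add: c.V_def c.aa_def c.BB_def c.EE_def c.dl_def c.xi_def aa_def BB_def EE_def dl_def xi_def)
  qed
  show ?thesis using main aa0 BB0 by blast
qed

lemma posdef_lower:
  fixes P :: "real^'m^'m"
  assumes pos: "\<And>z. z \<noteq> 0 \<Longrightarrow> z \<bullet> (P *v z) > 0"
  shows "\<exists>la>0. \<forall>v. la * (norm v)\<^sup>2 \<le> v \<bullet> (P *v v)"
proof -
  have cont: "continuous_on (sphere 0 1) (\<lambda>v::real^'m. v \<bullet> (P *v v))"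
    by (intro continuous_intros linear_continuous_on matrix_vector_mul_bounded_linear)
  obtain v0 where v0: "v0 \<in> sphere 0 1" "\<forall>v\<in>sphere 0 1. v0 \<bullet> (P *v v0) \<le> v \<bullet> (P *v v)"
    using continuous_attains_inf[OF compact_sphere _ cont] by auto
  have v00: "v0 \<noteq> 0" using v0(1) by auto
  define la where "la = v0 \<bullet> (P *v v0)"
  have la0: "la > 0" unfolding la_def using pos[OF v00] .
  have "la * (norm v)\<^sup>2 \<le> v \<bullet> (P *v v)" for v
  proof (cases "v = 0")
    case True then show ?thesis by simp
  next
    case False
    define u where "u = (1 / norm v) *\<^sub>R v"
    have u1: "u \<in> sphere 0 1" unfolding u_def using False by simp
    have vu: "v = norm v *\<^sub>R u" unfolding u_def using False by simp
    have "v \<bullet> (P *v v) = (norm v)\<^sup>2 * (u \<bullet> (P *v u))"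
      by (subst vu, subst vu) (simp add: matrix_vector_mult_scaleR power2_eq_square algebra_simps)
    moreover have "la \<le> u \<bullet> (P *v u)" using v0(2) u1 unfolding la_def by auto
    ultimately show ?thesis using mult_right_mono[OF _ zero_le_power2, of la "u \<bullet> (P *v u)" "norm v"] by (simp add: mult.commute)
  qed
  then show ?thesis using la0 by blast
qed

lemma Psym_of:
  fixes P :: "real^'m^'m"
  assumes "transpose P = P"
  shows "a \<bullet> (P *v b) = b \<bullet> (P *v a)"
proof -
  have "a \<bullet> (P *v b) = (a v* P) \<bullet> b" by (simp add: dot_lmul_matrix)
  also have "a v* P = P *v a" using vector_transpose_matrix[of a P] assms by simp
  finally show ?thesis by (simp add: inner_commute)
qed

lemma classK_id: "classK (\<lambda>r. c * r)" if "c > 0" for c :: real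
  unfolding classK_def using that by (auto intro!: continuous_intros simp: strict_mono_on_def)

lemma classKL_exp:
  fixes c a :: real
  assumes c: "c > 0" and a: "a > 0"
  shows "classKL (\<lambda>r t. c * r * exp (- a * t))"
  unfolding classKL_def
proof (intro conjI allI impI)
  fix t :: real assume "t \<ge> 0"
  have "c * exp (- a * t) > 0" using c by simp
  from classK_id[OF this] show "classK (\<lambda>r. c * r * exp (- a * t))"
    by (simp add: mult.assoc mult.commute mult.left_commute)
next
  fix r s t :: real assume r: "r \<ge> 0" and st: "0 \<le> s \<and> s \<le> t"
  then show "c * r * exp (- a * t) \<le> c * r * exp (- a * s)"
    using c a by (intro mult_left_mono) (auto simp: mult_left_mono)
next
  fix r :: real assume r: "r \<ge> 0"
  have "filterlim (\<lambda>t. - a * t) at_bot at_top"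
    using filterlim_tendsto_neg_mult_at_bot[OF tendsto_const[of "- a"] _ filterlim_ident] a by simp
  then have "((\<lambda>t. exp (- a * t)) \<longlongrightarrow> 0) at_top"
    by (rule filterlim_compose[OF exp_at_bot])
  then show "((\<lambda>t. c * r * exp (- a * t)) \<longlongrightarrow> 0) at_top"
    by (rule tendsto_mult_right_zero)
qed


(* ---- Main5 ---- *)

lemma upm: "(c::real) \<ge> 0 \<Longrightarrow> c \<le> m \<Longrightarrow> X \<le> c * n \<Longrightarrow> n \<ge> 0 \<Longrightarrow> X \<le> m * n"
  by (meson mult_right_mono order_trans)

lemma final_bound:
  fixes la La BB aa t nt n0 Vt V0 :: real
  assumes la: "la > 0" and La: "La > 0" and BB: "BB \<ge> 0" and n0: "n0 \<ge> 0" and nt: "nt \<ge> 0"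
    and lo: "la * nt\<^sup>2 \<le> Vt" and up: "V0 \<le> La * n0\<^sup>2" and dec: "Vt \<le> V0 * exp (- aa * t) + BB"
  shows "nt \<le> sqrt (La / la) * n0 * exp (- (aa / 2) * t) + sqrt (BB / la)"
proof -
  define Y where "Y = sqrt (La / la) * n0 * exp (- (aa / 2) * t)"
  have Y0: "Y \<ge> 0" unfolding Y_def using la La n0 by simp
  have e: "exp (- aa * t) = (exp (- (aa / 2) * t))\<^sup>2"
    by (simp add: power2_eq_square exp_add[symmetric])
  have Y2: "Y\<^sup>2 = La / la * n0\<^sup>2 * exp (- aa * t)"
    unfolding Y_def e using la La by (simp add: power_mult_distrib)
  have "V0 * exp (- aa * t) \<le> La * n0\<^sup>2 * exp (- aa * t)" using up by (intro mult_right_mono) auto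
  then have "la * nt\<^sup>2 \<le> La * n0\<^sup>2 * exp (- aa * t) + BB" using lo dec by linarith
  then have "nt\<^sup>2 \<le> (La * n0\<^sup>2 * exp (- aa * t) + BB) / la" using la by (simp add: field_simps)
  also have "\<dots> = Y\<^sup>2 + BB / la" unfolding Y2 using la by (simp add: field_simps)
  finally have "nt \<le> sqrt (Y\<^sup>2 + BB / la)" by (rule real_le_rsqrt)
  also have "\<dots> \<le> sqrt (Y\<^sup>2) + sqrt (BB / la)" by (rule sqrt_add_le_add_sqrt) (use BB la in auto)
  also have "sqrt (Y\<^sup>2) = Y" using Y0 by simp
  finally show ?thesis unfolding Y_def .
qed

lemma winf_nonneg: "admissible \<omega>0 w \<Longrightarrow> winf w \<ge> 0"
proof -
  assume "admissible \<omega>0 w"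
  then have b: "\<forall>t\<ge>0. norm (w t) \<le> \<omega>0" unfolding admissible_def by auto
  have "bdd_above ((\<lambda>t. norm (w t)) ` {0..})" using b by (intro bdd_aboveI[of _ \<omega>0]) auto
  then have "norm (w 0) \<le> winf w" unfolding winf_def by (intro cSUP_upper) auto
  then show ?thesis by (meson norm_ge_zero order_trans)
qed

theorem theorem5:
  fixes A :: "real^'nx^'nx" and B :: "real^'nu^'nx" and C :: "real^'nx^'ny"
    and Cq :: "real^'nx^'nq" and E :: "real^'np^'nx" and Ew :: "real^'nw^'nx"
    and Fw :: "real^'nw^'ny" and p :: "real^'nq \<Rightarrow> real^'np"
    and K1 :: "real^'nx^'nu" and K2 :: "real^'np^'nu"
    and L1 :: "real^'ny^'nq" and L2 :: "real^'ny^'nx"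
    and P :: "real^('nx + 'nx)^('nx + 'nx)"
    and \<alpha>0 \<mu> \<omega>0 Lp :: real
  assumes p0: "p 0 = 0"
    and p_lip: "Lp-lipschitz_on UNIV p"
    and \<omega>0_pos: "\<omega>0 > 0"
    and \<alpha>0_pos: "\<alpha>0 > 0" and \<mu>_pos: "\<mu> > 0"
    and P_sym: "transpose P = P"
    and P_pos: "\<And>z. z \<noteq> 0 \<Longrightarrow> z \<bullet> (P *v z) > 0"
    and dissip: "\<And>x xh w.
       let u = K1 *v xh + K2 *v p (Cq *v xh);
           y = C *v x + Fw *v w;
           xd = A *v x + B *v u + E *v p (Cq *v x) + Ew *v w;
           xhd = A *v xh + B *v u + E *v p (Cq *v xh + L1 *v (C *v xh - y)) + L2 *v (C *v xh - y);
           z = cat x (x - xh);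
           zd = cat xd (xd - xhd)
       in zd \<bullet> (P *v z) + z \<bullet> (P *v zd) \<le> - \<alpha>0 * (z \<bullet> (P *v z)) + \<mu> * (norm w)\<^sup>2"
  shows "\<exists>\<tau>y \<sigma>y \<epsilon>y \<tau>u \<sigma>u \<epsilon>u. \<tau>y > 0 \<and> \<sigma>y > 0 \<and> \<epsilon>y > 0 \<and> \<tau>u > 0 \<and> \<sigma>u > 0 \<and> \<epsilon>u > 0 \<and>
     ISpS \<omega>0 (et_solution A B C Cq E Ew Fw p K1 K2 L1 L2 \<tau>y \<sigma>y \<epsilon>y \<tau>u \<sigma>u \<epsilon>u)"
proof -
  have Lp0: "Lp \<ge> 0" using p_lip by (rule lipschitz_on_nonneg)
  have plipn: "norm (p a - p b) \<le> Lp * norm (a - b)" for a b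
    using lipschitz_onD[OF p_lip, of a b] by (simp add: dist_norm)
  obtain cA where cA: "cA \<ge> 0" "\<forall>v. norm (A *v v) \<le> cA * norm v" using matrix_bound by blast
  obtain cB where cB: "cB \<ge> 0" "\<forall>v. norm (B *v v) \<le> cB * norm v" using matrix_bound by blast
  obtain cC where cC: "cC \<ge> 0" "\<forall>v. norm (C *v v) \<le> cC * norm v" using matrix_bound by blast
  obtain cCq where cCq: "cCq \<ge> 0" "\<forall>v. norm (Cq *v v) \<le> cCq * norm v" using matrix_bound by blast
  obtain cE where cE: "cE \<ge> 0" "\<forall>v. norm (E *v v) \<le> cE * norm v" using matrix_bound by blast
  obtain cEw where cEw: "cEw \<ge> 0" "\<forall>v. norm (Ew *v v) \<le> cEw * norm v" using matrix_bound by blast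
  obtain cFw where cFw: "cFw \<ge> 0" "\<forall>v. norm (Fw *v v) \<le> cFw * norm v" using matrix_bound by blast
  obtain cK1 where cK1: "cK1 \<ge> 0" "\<forall>v. norm (K1 *v v) \<le> cK1 * norm v" using matrix_bound by blast
  obtain cK2 where cK2: "cK2 \<ge> 0" "\<forall>v. norm (K2 *v v) \<le> cK2 * norm v" using matrix_bound by blast
  obtain cL1 where cL1: "cL1 \<ge> 0" "\<forall>v. norm (L1 *v v) \<le> cL1 * norm v" using matrix_bound by blast
  obtain cL2 where cL2: "cL2 \<ge> 0" "\<forall>v. norm (L2 *v v) \<le> cL2 * norm v" using matrix_bound by blast
  obtain cP where cP: "cP \<ge> 0" "\<forall>v. norm (P *v v) \<le> cP * norm v" using matrix_bound by blast
  define m where "m = 1 + Lp + cA + cB + cC + cCq + cE + cEw + cFw + cK1 + cK2 + cL1 + cL2 + cP"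
  have m1: "m \<ge> 1" unfolding m_def using Lp0 cA cB cC cCq cE cEw cFw cK1 cK2 cL1 cL2 cP by linarith
  have cle: "cA \<le> m" "cB \<le> m" "cC \<le> m" "cCq \<le> m" "cE \<le> m" "cEw \<le> m" "cFw \<le> m" "cK1 \<le> m" "cK2 \<le> m" "cL1 \<le> m" "cL2 \<le> m" "cP \<le> m" "Lp \<le> m"
    unfolding m_def using Lp0 cA cB cC cCq cE cEw cFw cK1 cK2 cL1 cL2 cP by linarith+
  have mA: "\<And>v. norm (A *v v) \<le> m * norm v" using upm[OF cA(1) cle(1) cA(2)[rule_format] norm_ge_zero] .
  have mB: "\<And>v. norm (B *v v) \<le> m * norm v" using upm[OF cB(1) cle(2) cB(2)[rule_format] norm_ge_zero] .
  have mC: "\<And>v. norm (C *v v) \<le> m * norm v" using upm[OF cC(1) cle(3) cC(2)[rule_format] norm_ge_zero] .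
  have mCq: "\<And>v. norm (Cq *v v) \<le> m * norm v" using upm[OF cCq(1) cle(4) cCq(2)[rule_format] norm_ge_zero] .
  have mE: "\<And>v. norm (E *v v) \<le> m * norm v" using upm[OF cE(1) cle(5) cE(2)[rule_format] norm_ge_zero] .
  have mEw: "\<And>v. norm (Ew *v v) \<le> m * norm v" using upm[OF cEw(1) cle(6) cEw(2)[rule_format] norm_ge_zero] .
  have mFw: "\<And>v. norm (Fw *v v) \<le> m * norm v" using upm[OF cFw(1) cle(7) cFw(2)[rule_format] norm_ge_zero] .
  have mK1: "\<And>v. norm (K1 *v v) \<le> m * norm v" using upm[OF cK1(1) cle(8) cK1(2)[rule_format] norm_ge_zero] .
  have mK2: "\<And>v. norm (K2 *v v) \<le> m * norm v" using upm[OF cK2(1) cle(9) cK2(2)[rule_format] norm_ge_zero] .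
  have mL1: "\<And>v. norm (L1 *v v) \<le> m * norm v" using upm[OF cL1(1) cle(10) cL1(2)[rule_format] norm_ge_zero] .
  have mL2: "\<And>v. norm (L2 *v v) \<le> m * norm v" using upm[OF cL2(1) cle(11) cL2(2)[rule_format] norm_ge_zero] .
  have mP: "\<And>v. norm (P *v v) \<le> m * norm v" using upm[OF cP(1) cle(12) cP(2)[rule_format] norm_ge_zero] .
  have plip: "\<And>a b. norm (p a - p b) \<le> m * norm (a - b)" using upm[OF Lp0 cle(13) plipn norm_ge_zero] .
  obtain la where la: "la > 0" "\<forall>v. la * (norm v)\<^sup>2 \<le> v \<bullet> (P *v v)" using posdef_lower[OF P_pos] by blast
  have Psym: "\<And>a b. a \<bullet> (P *v b) = b \<bullet> (P *v a)" by (rule Psym_of[OF P_sym])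
  have la2: "\<And>v. la * (norm v)\<^sup>2 \<le> v \<bullet> (P *v v)" using la(2) by blast
  have sysf: "sys A B C Cq E Ew Fw p K1 K2 L1 L2 P \<alpha>0 \<mu> \<omega>0 m la"
    by (rule sys.intro) (rule p0 plip \<omega>0_pos \<alpha>0_pos \<mu>_pos m1 la(1) la2 Psym mA mB mC mCq mE mEw mFw mK1 mK2 mL1 mL2 mP dissip)+
  interpret S: sys A B C Cq E Ew Fw p K1 K2 L1 L2 P \<alpha>0 \<mu> \<omega>0 m la by (rule sysf)
  define K where "K = S.Kc"
  define Cc where "Cc = S.Cc"
  define al where "al = \<alpha>0 * la"
  define La where "La = m"
  define X where "X = al * la / (64 * La)"
  define D where "D = 8 * m * S.Le * (2 + m)"
  define \<sigma> where "\<sigma> = min 1 (X / (2 * (D + 1)))"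
  define Q where "Q = 8*al*K + D*K + 8*La*K\<^sup>2 + 1"
  define h where "h = min (min 1 (1 / (4*K))) (min (La/al) (X / (2*Q)))"
  have K0: "K > 0" unfolding K_def by (rule S.consts_pos(5))
  have Cc0: "Cc \<ge> 0" unfolding Cc_def by (rule S.consts_pos(7))
  have Le0: "S.Le \<ge> 0" by (rule S.consts_pos(6))
  have al0: "al > 0" unfolding al_def using \<alpha>0_pos la(1) by simp
  have La0: "La > 0" unfolding La_def using m1 by simp
  have X0: "X > 0" unfolding X_def using al0 la(1) La0 by simp
  have D0: "D \<ge> 0" unfolding D_def using m1 Le0 by simp
  have Q0: "Q > 0" unfolding Q_def using al0 K0 D0 La0 by (simp add: add_pos_nonneg)
  have \<sigma>0: "\<sigma> > 0" "\<sigma> \<le> 1" unfolding \<sigma>_def using X0 D0 by auto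
  have h0: "h > 0" "h \<le> 1" unfolding h_def using K0 La0 al0 X0 Q0 by auto
  have hK: "h * K \<le> 1/4"
  proof -
    have "h \<le> 1 / (4*K)" unfolding h_def by simp
    then have "h * K \<le> 1 / (4*K) * K" using K0 by (intro mult_right_mono) auto
    then show ?thesis using K0 by simp
  qed
  have hal: "h * al \<le> La"
  proof -
    have "h \<le> La / al" unfolding h_def by simp
    then have "h * al \<le> La / al * al" using al0 by (intro mult_right_mono) auto
    then show ?thesis using al0 by simp
  qed
  have hQ: "h * Q \<le> X / 2"
  proof -
    have "h \<le> X / (2*Q)" unfolding h_def by simp
    then have "h * Q \<le> X / (2*Q) * Q" using Q0 by (intro mult_right_mono) auto
    then show ?thesis using Q0 by simp
  qed
  have D\<sigma>: "D * \<sigma> \<le> X / 2"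
  proof -
    have "\<sigma> \<le> X / (2 * (D + 1))" unfolding \<sigma>_def by simp
    then have "D * \<sigma> \<le> D * (X / (2 * (D + 1)))" using D0 by (intro mult_left_mono) auto
    also have "\<dots> \<le> X / 2" using D0 X0 by (simp add: field_simps)
    finally show ?thesis .
  qed
  have eta_eq: "4 * S.eta \<sigma> h = D * \<sigma> + D * (h * K)"
    unfolding S.eta_def D_def K_def by (simp add: algebra_simps)
  have eta0: "S.eta \<sigma> h \<ge> 0" using eta_eq D0 \<sigma>0 h0 K0 by (smt (verit) mult_nonneg_nonneg)
  have cxi: "64 * La * (8*al*h*K + 4 * S.eta \<sigma> h + 8*La*h*K\<^sup>2) \<le> al * la"
  proof -
    have "8*al*h*K + 4 * S.eta \<sigma> h + 8*La*h*K\<^sup>2 = D * \<sigma> + h * (Q - 1)"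
      unfolding eta_eq Q_def by (simp add: algebra_simps power2_eq_square)
    also have "\<dots> \<le> X" using D\<sigma> hQ h0 by (simp add: right_diff_distrib)
    finally have "8*al*h*K + 4 * S.eta \<sigma> h + 8*La*h*K\<^sup>2 \<le> X" .
    then have "64 * La * (8*al*h*K + 4 * S.eta \<sigma> h + 8*La*h*K\<^sup>2) \<le> 64 * La * X"
      using La0 by (intro mult_left_mono) auto
    also have "\<dots> = al * la" unfolding X_def using La0 by simp
    finally show ?thesis .
  qed
  have Vup: "\<And>a b. \<bar>a \<bullet> (P *v b)\<bar> \<le> La * norm a * norm b"
  proof -
    fix a b :: "real^('nx+'nx)"
    have "\<bar>a \<bullet> (P *v b)\<bar> \<le> norm a * norm (P *v b)" by (rule Cauchy_Schwarz_ineq2)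
    also have "\<dots> \<le> norm a * (m * norm b)" by (intro mult_left_mono mP) auto
    finally show "\<bar>a \<bullet> (P *v b)\<bar> \<le> La * norm a * norm b" unfolding La_def by (simp add: algebra_simps)
  qed
  obtain aa BB where aa: "aa > 0" and BB: "BB \<ge> 0" and dec: "\<forall>(z::real \<Rightarrow> real^('nx+'nx)) (G::real \<Rightarrow> real^('nx+'nx)). (\<forall>T\<ge>0. continuous_on {0..T} z) \<and>
      (\<forall>s t. 0 \<le> s \<and> s \<le> t \<longrightarrow> (G has_integral (z t - z s)) {s..t}) \<and>
      (\<forall>r M. r \<ge> 0 \<and> (\<forall>q\<in>{max 0 (r-h)..r}. norm (z q) \<le> M) \<longrightarrow> norm (G r) \<le> K * (M + 1)) \<and>
      (\<forall>r M. r \<ge> 0 \<and> (\<forall>q\<in>{max 0 (r-2*h)..r}. norm (z q) \<le> M) \<longrightarrow>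
              2 * (G r \<bullet> (P *v z r)) \<le> - al * (norm (z r))\<^sup>2 + S.eta \<sigma> h * M\<^sup>2 + Cc * (M + 1))
      \<longrightarrow> (\<forall>t\<ge>0. z t \<bullet> (P *v z t) \<le> z 0 \<bullet> (P *v z 0) * exp (- aa * t) + BB)"
    using core_exists[OF al0 la(1) La0 K0 Cc0 eta0 h0(1) la2 Vup Psym hK hal cxi] by blast
  define c where "c = sqrt (La / la)"
  have c0: "c > 0" unfolding c_def using La0 la(1) by simp
  show ?thesis
  proof (rule exI[of _ h], rule exI[of _ \<sigma>], rule exI[of _ "1::real"], rule exI[of _ h], rule exI[of _ \<sigma>],
      rule exI[of _ "1::real"], intro conjI h0(1) \<sigma>0(1) zero_less_one)
    show "ISpS \<omega>0 (et_solution A B C Cq E Ew Fw p K1 K2 L1 L2 h \<sigma> 1 h \<sigma> 1)"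
      unfolding ISpS_def
    proof (intro exI[of _ "\<lambda>r t. c * r * exp (- (aa/2) * t)"] exI[of _ "\<lambda>r. 1 * r"] exI[of _ "sqrt (BB / la)"] conjI allI impI)
      show "classKL (\<lambda>r t. c * r * exp (- (aa/2) * t))" by (rule classKL_exp) (use c0 aa in auto)
      show "classK (\<lambda>r::real. 1 * r)" by (rule classK_id) simp
      show "sqrt (BB / la) \<ge> 0" using BB la by simp
      fix x xh :: "real \<Rightarrow> real^'nx" and w :: "real \<Rightarrow> real^'nw" and t :: real
      assume A: "admissible \<omega>0 w \<and> et_solution A B C Cq E Ew Fw p K1 K2 L1 L2 h \<sigma> 1 h \<sigma> 1 x xh w"
        and t0: "0 \<le> t"
      from A have adm: "admissible \<omega>0 w" and es: "et_solution A B C Cq E Ew Fw p K1 K2 L1 L2 h \<sigma> 1 h \<sigma> 1 x xh w"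
        by auto
      have wb: "\<And>t. t \<ge> 0 \<Longrightarrow> norm (w t) \<le> \<omega>0" using adm unfolding admissible_def by auto
      from es obtain ty tu ys xhs where
        trY: "trig h \<sigma> 1 (\<lambda>t. C *v x t + Fw *v w t) ty" and hdY: "held ty (\<lambda>t. C *v x t + Fw *v w t) ys"
        and trU: "trig h \<sigma> 1 xh tu" and hdU: "held tu xh xhs"
        and ints: "\<forall>t\<ge>0. ((\<lambda>s. A *v x s + B *v (K1 *v xhs s + K2 *v p (Cq *v xhs s)) + E *v p (Cq *v x s) + Ew *v w s)
             has_integral (x t - x 0)) {0..t} \<and>
          ((\<lambda>s. A *v xh s + B *v (K1 *v xhs s + K2 *v p (Cq *v xhs s))
                 + E *v p (Cq *v xh s + L1 *v (C *v xh s - ys s))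
                 + L2 *v (C *v xh s - ys s))
             has_integral (xh t - xh 0)) {0..t}"
        unfolding et_solution_def Let_def by blast
      have solf: "sol A B C Cq E Ew Fw p K1 K2 L1 L2 P \<alpha>0 \<mu> \<omega>0 m la h \<sigma> x xh w ty tu ys xhs"
        by (rule sol.intro[OF sysf], rule sol_axioms.intro) (use h0 \<sigma>0 wb trY hdY trU hdU ints in auto)
      interpret T: sol A B C Cq E Ew Fw p K1 K2 L1 L2 P \<alpha>0 \<mu> \<omega>0 m la h \<sigma> x xh w ty tu ys xhs by (rule solf)
      have hy1: "\<forall>T\<ge>0. continuous_on {0..T} T.z" using T.zcont by blast
      have hy2: "\<forall>s t. 0 \<le> s \<and> s \<le> t \<longrightarrow> (T.G has_integral (T.z t - T.z s)) {s..t}" using T.zint by blast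
      have hy3: "\<forall>r M. r \<ge> 0 \<and> (\<forall>q\<in>{max 0 (r-h)..r}. norm (T.z q) \<le> M) \<longrightarrow> norm (T.G r) \<le> K * (M + 1)"
        unfolding K_def using T.H1 by blast
      have hy4: "\<forall>r M. r \<ge> 0 \<and> (\<forall>q\<in>{max 0 (r-2*h)..r}. norm (T.z q) \<le> M) \<longrightarrow>
              2 * (T.G r \<bullet> (P *v T.z r)) \<le> - al * (norm (T.z r))\<^sup>2 + S.eta \<sigma> h * M\<^sup>2 + Cc * (M + 1)"
        unfolding Cc_def al_def using T.H2 by blast
      have V: "T.z t \<bullet> (P *v T.z t) \<le> T.z 0 \<bullet> (P *v T.z 0) * exp (- aa * t) + BB"
        using dec hy1 hy2 hy3 hy4 t0 by blast
      have up: "T.z 0 \<bullet> (P *v T.z 0) \<le> La * (norm (T.z 0))\<^sup>2"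
        using Vup[of "T.z 0" "T.z 0"] by (simp add: power2_eq_square mult.assoc)
      have "norm (T.z t) \<le> sqrt (La / la) * norm (T.z 0) * exp (- (aa / 2) * t) + sqrt (BB / la)"
        by (rule final_bound[OF la(1) La0 BB norm_ge_zero norm_ge_zero la2 up V])
      moreover have "winf w \<ge> 0" by (rule winf_nonneg[OF adm])
      ultimately show "norm (cat (x t) (x t - xh t)) \<le> c * norm (cat (x 0) (x 0 - xh 0)) * exp (- (aa / 2) * t) + 1 * winf w + sqrt (BB / la)"
        unfolding T.z_def c_def by simp
    qed
  qed
qed


end
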